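(* For each $n\ge1$ and $p\in[0,1)$, the reliability polynomial of $\Gamma_n$ is $$R(\Gamma_n,p)=p^{\frac{3^n+1}{2}}(1-p)^{\frac{3^n-1}{2}}\,T_n\!\left(1,\tfrac{1}{1-p}\right),\qquad T_n\!\left(1,\tfrac{1}{1-p}\right)=T_{2,n}\!\left(1,\tfrac{1}{1-p}\right),$$ where, writing $T_2,N,M$ for $T_{2,n},N_n,M_n$ evaluated at $(1,\frac1{1-p})$, $$T_{2,n+1}=\tfrac{p}{1-p}T_2^3+6T_2^2N,\quad N_{n+1}=\tfrac{p}{1-p}T_2^2N+T_2^2M+7T_2N^2,\quad M_{n+1}=\tfrac{3p}{1-p}T_2N^2+12T_2NM+14N^3,$$ with $T_{2,1}(1,\frac1{1-p})=\frac{3-2p}{1-p}$, $N_1=M_1=1$.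
   Context: Graphs are finite; multiple edges are allowed. For a graph $G$, a spanning subgraph $A$ has vertex set $V(G)$ and edge set $E(A)\subseteq E(G)$; $k(A)$ is its number of components, $r(A)=|V(G)|-k(A)$, $n(A)=|E(A)|-r(A)$; the weight of $A$ is $(x-1)^{r(G)-r(A)}(y-1)^{n(A)}$ and the Tutte polynomial $T(G;x,y)$ is the sum of the weights of all spanning subgraphs. Sierpiński graphs $\Gamma_n$ ($n\ge1$), each with three outmost vertices top, left, right: $\Gamma_1$ is the triangle $K_3$; $\Gamma_{n+1}$ is obtained from three disjoint copies $G_1,G_2,G_3$ of $\Gamma_n$ by identifying left$(G_1)$ with top$(G_2)$, right$(G_1)$ with top$(G_3)$, right$(G_2)$ with left$(G_3)$; its outmost vertices are top$(G_1)$, left$(G_2)$, right$(G_3)$. $T_n=T(\Gamma_n;x,y)$. $T_{2,n}$ (resp. $T_{1,n}$, $T_{0,n}$) is the sum of the weights of the spanning subgraphs of $\Gamma_n$ in which the three outmost vertices lie in one component (resp. left and right outmost in one component, top in another; resp. the three in three distinct components). $N_n(x,y)=T_{1,n}/(x-1)$ and $M_n(x,y)=T_{0,n}/(x-1)^2$, which are polynomials. The reliability polynomial $R(G,p)$ is the probability that the random spanning subgraph obtained by keeping each edge independently with probability $p$ is connected. *)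

theory Defs
  imports Complex_Main
begin

text \<open>Vertices are natural numbers; edges are given by a list of endpoint pairs,
  edge i being the i-th list entry (so multiple edges are allowed).\<close>

record sgraph =
  verts :: "nat set"
  edges :: "(nat \<times> nat) list"
  top :: nat
  lft :: nat
  rgt :: nat

definition edge_ids :: "sgraph \<Rightarrow> nat set" where
  "edge_ids G = {0..<length (edges G)}"

definition triangle :: sgraph where
  "triangle = \<lparr>verts = {0,1,2}, edges = [(0,1),(1,2),(0,2)], top = 0, lft = 1, rgt = 2\<rparr>"

text \<open>Three disjoint copies G1,G2,G3 (vertex v of copy i is encoded as 3v+i-1),
  with left(G1)=top(G2), right(G1)=top(G3), right(G2)=left(G3) identified.\<close>
definition sier_step :: "sgraph \<Rightarrow> sgraph" where
  "sier_step G =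
    (let f1 = (\<lambda>v. 3*v);
         f2 = (\<lambda>v. if v = top G then 3 * lft G else 3*v+1);
         f3 = (\<lambda>v. if v = top G then 3 * rgt G
                   else if v = lft G then 3 * rgt G + 1 else 3*v+2)
     in \<lparr>verts = f1 ` verts G \<union> f2 ` verts G \<union> f3 ` verts G,
         edges = map (map_prod f1 f1) (edges G) @ map (map_prod f2 f2) (edges G)
                 @ map (map_prod f3 f3) (edges G),
         top = f1 (top G), lft = f2 (lft G), rgt = f3 (rgt G)\<rparr>)"

primrec sier_aux :: "nat \<Rightarrow> sgraph" where
  "sier_aux 0 = triangle"
| "sier_aux (Suc n) = sier_step (sier_aux n)"

definition Sierpinski :: "nat \<Rightarrow> sgraph" where
  "Sierpinski n = sier_aux (n - 1)"

text \<open>Spanning subgraph A given by a set S of edge indices.\<close>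
definition adj :: "sgraph \<Rightarrow> nat set \<Rightarrow> nat \<Rightarrow> nat \<Rightarrow> bool" where
  "adj G S u v \<longleftrightarrow> (\<exists>i\<in>S. i < length (edges G) \<and>
      (edges G ! i = (u,v) \<or> edges G ! i = (v,u)))"

definition conn :: "sgraph \<Rightarrow> nat set \<Rightarrow> (nat \<times> nat) set" where
  "conn G S = {(u,v). u \<in> verts G \<and> v \<in> verts G \<and> (adj G S)\<^sup>*\<^sup>* u v}"

definition ncomp :: "sgraph \<Rightarrow> nat set \<Rightarrow> nat" where
  "ncomp G S = card (verts G // conn G S)"

definition rk :: "sgraph \<Rightarrow> nat set \<Rightarrow> nat" where
  "rk G S = card (verts G) - ncomp G S"

definition nul :: "sgraph \<Rightarrow> nat set \<Rightarrow> nat" where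
  "nul G S = card S - rk G S"

definition tweight :: "sgraph \<Rightarrow> real \<Rightarrow> real \<Rightarrow> nat set \<Rightarrow> real" where
  "tweight G x y S = (x - 1) ^ (rk G (edge_ids G) - rk G S) * (y - 1) ^ nul G S"

definition tutte :: "sgraph \<Rightarrow> real \<Rightarrow> real \<Rightarrow> real" where
  "tutte G x y = (\<Sum>S\<in>Pow (edge_ids G). tweight G x y S)"

definition T2 :: "sgraph \<Rightarrow> real \<Rightarrow> real \<Rightarrow> real" where
  "T2 G x y = (\<Sum>S | S \<subseteq> edge_ids G \<and> (top G, lft G) \<in> conn G S \<and> (top G, rgt G) \<in> conn G S.
      tweight G x y S)"

definition T1 :: "sgraph \<Rightarrow> real \<Rightarrow> real \<Rightarrow> real" where
  "T1 G x y = (\<Sum>S | S \<subseteq> edge_ids G \<and> (lft G, rgt G) \<in> conn G S \<and> (top G, lft G) \<notin> conn G S.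
      tweight G x y S)"

definition T0 :: "sgraph \<Rightarrow> real \<Rightarrow> real \<Rightarrow> real" where
  "T0 G x y = (\<Sum>S | S \<subseteq> edge_ids G \<and> (top G, lft G) \<notin> conn G S \<and> (top G, rgt G) \<notin> conn G S
      \<and> (lft G, rgt G) \<notin> conn G S. tweight G x y S)"

text \<open>N = T1/(x-1) and M = T0/(x-1)^2 as polynomials: in every term of T1
  (resp. T0) the exponent of (x-1) is at least 1 (resp. 2), and we lower it.\<close>
definition Npoly :: "sgraph \<Rightarrow> real \<Rightarrow> real \<Rightarrow> real" where
  "Npoly G x y = (\<Sum>S | S \<subseteq> edge_ids G \<and> (lft G, rgt G) \<in> conn G S \<and> (top G, lft G) \<notin> conn G S.
      (x - 1) ^ (rk G (edge_ids G) - rk G S - 1) * (y - 1) ^ nul G S)"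

definition Mpoly :: "sgraph \<Rightarrow> real \<Rightarrow> real \<Rightarrow> real" where
  "Mpoly G x y = (\<Sum>S | S \<subseteq> edge_ids G \<and> (top G, lft G) \<notin> conn G S \<and> (top G, rgt G) \<notin> conn G S
      \<and> (lft G, rgt G) \<notin> conn G S. (x - 1) ^ (rk G (edge_ids G) - rk G S - 2) * (y - 1) ^ nul G S)"

definition reliability :: "sgraph \<Rightarrow> real \<Rightarrow> real" where
  "reliability G p = (\<Sum>S | S \<subseteq> edge_ids G \<and> ncomp G S = 1.
      p ^ card S * (1 - p) ^ (card (edge_ids G) - card S))"

end

theory Submission
  imports Defs
begin


datatype st = SF | SNt | SNl | SNr | SM
datatype pt = PT | PA | PB | PL | PC | PR

lemma UNIV_st: "(UNIV::st set) = {SF,SNt,SNl,SNr,SM}" by (auto intro: st.exhaust)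
lemma UNIV_pt: "(UNIV::pt set) = {PT,PA,PB,PL,PC,PR}" by (auto) (metis pt.exhaust)

fun bTL :: "st \<Rightarrow> bool" where "bTL SF = True" | "bTL SNr = True" | "bTL _ = False"
fun bTR :: "st \<Rightarrow> bool" where "bTR SF = True" | "bTR SNl = True" | "bTR _ = False"
fun bLR :: "st \<Rightarrow> bool" where "bLR SF = True" | "bLR SNt = True" | "bLR _ = False"
fun nc :: "st \<Rightarrow> nat" where "nc SF = 1" | "nc SM = 3" | "nc _ = 2"

definition stof :: "bool \<Rightarrow> bool \<Rightarrow> bool \<Rightarrow> st" where
  "stof a b c = (if a \<and> b then SF else if c then SNt else if b then SNl else if a then SNr else SM)"

definition rel :: "st \<Rightarrow> nat \<Rightarrow> nat \<Rightarrow> bool" where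
  "rel s k k' = (k = k' \<or> ({k,k'} = {0,1} \<and> bTL s) \<or> ({k,k'} = {0,2} \<and> bTR s) \<or> ({k,k'} = {1,2} \<and> bLR s))"

definition qp :: "nat \<Rightarrow> nat \<Rightarrow> pt" where
  "qp i k = (if i = 0 then (if k = 0 then PT else if k = 1 then PA else PB)
       else if i = 1 then (if k = 0 then PA else if k = 1 then PL else PC)
       else (if k = 0 then PB else if k = 1 then PC else PR))"

definition sts :: "st \<Rightarrow> st \<Rightarrow> st \<Rightarrow> nat \<Rightarrow> st" where
  "sts s1 s2 s3 i = (if i = 0 then s1 else if i = 1 then s2 else s3)"

definition Eabs :: "st \<Rightarrow> st \<Rightarrow> st \<Rightarrow> pt \<Rightarrow> pt \<Rightarrow> bool" where
  "Eabs s1 s2 s3 x y = (\<exists>i<3. \<exists>k<3. \<exists>k'<3. x = qp i k \<and> y = qp i k' \<and> rel (sts s1 s2 s3 i) k k')"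

definition lab :: "st \<Rightarrow> st \<Rightarrow> st \<Rightarrow> pt \<Rightarrow> pt" where
  "lab s1 s2 s3 x =
    (let AB = bLR s1 \<or> (bTR s2 \<and> bTL s3);
         AC = bTR s2 \<or> (bLR s1 \<and> bTL s3);
         BC = bTL s3 \<or> (bLR s1 \<and> bTR s2);
         lB = (if AB then PA else PB);
         lC = (if AC then PA else if BC then PB else PC)
     in case x of PA \<Rightarrow> PA | PB \<Rightarrow> lB | PC \<Rightarrow> lC
       | PT \<Rightarrow> (if bTL s1 then PA else if bTR s1 then lB else PT)
       | PL \<Rightarrow> (if bTL s2 then PA else if bLR s2 then lC else PL)
       | PR \<Rightarrow> (if bTR s3 then lB else if bLR s3 then lC else PR))"

lemma ex3: "(\<exists>i<(3::nat). P i) \<longleftrightarrow> P 0 \<or> P 1 \<or> P 2"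
  unfolding numeral_3_eq_3 numeral_2_eq_2 by (auto simp: less_Suc_eq)

lemma cons_s: "bTL s \<Longrightarrow> bTR s \<Longrightarrow> bLR s" "bTL s \<Longrightarrow> bLR s \<Longrightarrow> bTR s" "bTR s \<Longrightarrow> bLR s \<Longrightarrow> bTL s"
  by (cases s; simp)+

lemma Eabs_char: "Eabs s1 s2 s3 x y \<longleftrightarrow> x = y
   \<or> (bTL s1 \<and> {x,y} = {PT,PA}) \<or> (bTR s1 \<and> {x,y} = {PT,PB}) \<or> (bLR s1 \<and> {x,y} = {PA,PB})
   \<or> (bTL s2 \<and> {x,y} = {PA,PL}) \<or> (bTR s2 \<and> {x,y} = {PA,PC}) \<or> (bLR s2 \<and> {x,y} = {PL,PC})
   \<or> (bTL s3 \<and> {x,y} = {PB,PC}) \<or> (bTR s3 \<and> {x,y} = {PB,PR}) \<or> (bLR s3 \<and> {x,y} = {PC,PR})"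
  unfolding Eabs_def ex3
  apply (simp add: qp_def rel_def sts_def doubleton_eq_iff ex3 conj_disj_distribL conj_disj_distribR ex_disj_distrib)
  apply (cases x; cases y; simp)
  done

lemma lab_edges: fixes s1 s2 s3 :: st shows
  "bTL s1 \<Longrightarrow> lab s1 s2 s3 PT = lab s1 s2 s3 PA"
  "bTR s1 \<Longrightarrow> lab s1 s2 s3 PT = lab s1 s2 s3 PB"
  "bLR s1 \<Longrightarrow> lab s1 s2 s3 PA = lab s1 s2 s3 PB"
  "bTL s2 \<Longrightarrow> lab s1 s2 s3 PA = lab s1 s2 s3 PL"
  "bTR s2 \<Longrightarrow> lab s1 s2 s3 PA = lab s1 s2 s3 PC"
  "bLR s2 \<Longrightarrow> lab s1 s2 s3 PL = lab s1 s2 s3 PC"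
  "bTL s3 \<Longrightarrow> lab s1 s2 s3 PB = lab s1 s2 s3 PC"
  "bTR s3 \<Longrightarrow> lab s1 s2 s3 PB = lab s1 s2 s3 PR"
  "bLR s3 \<Longrightarrow> lab s1 s2 s3 PC = lab s1 s2 s3 PR"
  by (auto simp: lab_def Let_def dest: cons_s)

lemma Eabs_lab: "Eabs s1 s2 s3 x y \<Longrightarrow> lab s1 s2 s3 x = lab s1 s2 s3 y"
  unfolding Eabs_char doubleton_eq_iff
  using lab_edges by metis

lemma Eabs_sym: "Eabs s1 s2 s3 x y \<Longrightarrow> Eabs s1 s2 s3 y x"
  unfolding Eabs_char by (auto simp: insert_commute)

lemma Eabs_rt_sym: "(Eabs s1 s2 s3)\<^sup>*\<^sup>* x y \<Longrightarrow> (Eabs s1 s2 s3)\<^sup>*\<^sup>* y x"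
  by (induction rule: rtranclp_induct) (auto intro: converse_rtranclp_into_rtranclp Eabs_sym)

lemma stp: "Eabs s1 s2 s3 x y \<Longrightarrow> (Eabs s1 s2 s3)\<^sup>*\<^sup>* y z \<Longrightarrow> (Eabs s1 s2 s3)\<^sup>*\<^sup>* x z"
  by (rule converse_rtranclp_into_rtranclp)

lemma reach_B: "(Eabs s1 s2 s3)\<^sup>*\<^sup>* PB (lab s1 s2 s3 PB)"
proof -
  have "(Eabs s1 s2 s3)\<^sup>*\<^sup>* PB PA" if "bLR s1 \<or> (bTR s2 \<and> bTL s3)"
  proof -
    have "Eabs s1 s2 s3 PB PA" if "bLR s1" using that by (simp add: Eabs_char insert_commute)
    moreover have "Eabs s1 s2 s3 PB PC" if "bTL s3" using that by (simp add: Eabs_char)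
    moreover have "Eabs s1 s2 s3 PC PA" if "bTR s2" using that by (simp add: Eabs_char insert_commute)
    ultimately show ?thesis using that by (meson r_into_rtranclp stp)
  qed
  then show ?thesis by (auto simp: lab_def Let_def)
qed

lemma reach_C: "(Eabs s1 s2 s3)\<^sup>*\<^sup>* PC (lab s1 s2 s3 PC)"
proof -
  have a: "Eabs s1 s2 s3 PB PA" if "bLR s1" using that by (simp add: Eabs_char insert_commute)
  have b: "Eabs s1 s2 s3 PC PB" if "bTL s3" using that by (simp add: Eabs_char insert_commute)
  have c: "Eabs s1 s2 s3 PC PA" if "bTR s2" using that by (simp add: Eabs_char insert_commute)
  have a': "Eabs s1 s2 s3 PA PB" if "bLR s1" using that by (simp add: Eabs_char)
  have 1: "(Eabs s1 s2 s3)\<^sup>*\<^sup>* PC PA" if "bTR s2 \<or> (bLR s1 \<and> bTL s3)"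
    using that a b c by (meson r_into_rtranclp stp)
  have 2: "(Eabs s1 s2 s3)\<^sup>*\<^sup>* PC PB" if "bTL s3 \<or> (bLR s1 \<and> bTR s2)"
    using that a' b c by (meson r_into_rtranclp stp)
  show ?thesis using 1 2 by (auto simp: lab_def Let_def)
qed

lemma lab_reach: "(Eabs s1 s2 s3)\<^sup>*\<^sup>* x (lab s1 s2 s3 x)"
proof (cases x)
  case PT
  have e1: "Eabs s1 s2 s3 PT PA" if "bTL s1" using that by (simp add: Eabs_char)
  have e2: "Eabs s1 s2 s3 PT PB" if "bTR s1" using that by (simp add: Eabs_char)
  have "lab s1 s2 s3 PB = (if bLR s1 \<or> (bTR s2 \<and> bTL s3) then PA else PB)" by (simp add: lab_def Let_def)
  then show ?thesis using PT e1 e2 reach_B[of s1 s2 s3]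
    by (auto simp: lab_def Let_def intro: stp)
next
  case PA then show ?thesis by (simp add: lab_def)
next
  case PB then show ?thesis using reach_B by simp
next
  case PL
  have e1: "Eabs s1 s2 s3 PL PA" if "bTL s2" using that by (simp add: Eabs_char insert_commute)
  have e2: "Eabs s1 s2 s3 PL PC" if "bLR s2" using that by (simp add: Eabs_char)
  have "lab s1 s2 s3 PC = (if bTR s2 \<or> (bLR s1 \<and> bTL s3) then PA else if bTL s3 \<or> (bLR s1 \<and> bTR s2) then PB else PC)" by (simp add: lab_def Let_def)
  then show ?thesis using PL e1 e2 reach_C[of s1 s2 s3]
    by (auto simp: lab_def Let_def intro: stp)
next
  case PC then show ?thesis using reach_C by simp
next
  case PR
  have e1: "Eabs s1 s2 s3 PR PB" if "bTR s3" using that by (simp add: Eabs_char insert_commute)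
  have e2: "Eabs s1 s2 s3 PR PC" if "bLR s3" using that by (simp add: Eabs_char insert_commute)
  have "lab s1 s2 s3 PC = (if bTR s2 \<or> (bLR s1 \<and> bTL s3) then PA else if bTL s3 \<or> (bLR s1 \<and> bTR s2) then PB else PC)" by (simp add: lab_def Let_def)
  moreover have "lab s1 s2 s3 PB = (if bLR s1 \<or> (bTR s2 \<and> bTL s3) then PA else PB)" by (simp add: lab_def Let_def)
  ultimately show ?thesis using PR e1 e2 reach_C[of s1 s2 s3] reach_B[of s1 s2 s3]
    by (auto simp: lab_def Let_def intro: stp)
qed

lemma rt_iff: "(Eabs s1 s2 s3)\<^sup>*\<^sup>* x y \<longleftrightarrow> lab s1 s2 s3 x = lab s1 s2 s3 y"
proof
  assume "(Eabs s1 s2 s3)\<^sup>*\<^sup>* x y"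
  then show "lab s1 s2 s3 x = lab s1 s2 s3 y"
    by (induction rule: rtranclp_induct) (auto dest: Eabs_lab)
next
  assume "lab s1 s2 s3 x = lab s1 s2 s3 y"
  then show "(Eabs s1 s2 s3)\<^sup>*\<^sup>* x y"
    using lab_reach[of s1 s2 s3 x] lab_reach[of s1 s2 s3 y] Eabs_rt_sym
    by (metis rtranclp_trans)
qed


definition gc :: "st \<Rightarrow> st \<Rightarrow> st \<Rightarrow> bool" where
  "gc s1 s2 s3 = (\<forall>x\<in>{PT,PA,PB,PL,PC,PR}. lab s1 s2 s3 x \<in> {lab s1 s2 s3 PT, lab s1 s2 s3 PL, lab s1 s2 s3 PR})"
definition stc :: "st \<Rightarrow> st \<Rightarrow> st \<Rightarrow> st" where
  "stc s1 s2 s3 = stof (lab s1 s2 s3 PT = lab s1 s2 s3 PL) (lab s1 s2 s3 PT = lab s1 s2 s3 PR) (lab s1 s2 s3 PL = lab s1 s2 s3 PR)"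
definition cc :: "st \<Rightarrow> st \<Rightarrow> st \<Rightarrow> nat" where
  "cc s1 s2 s3 = card (lab s1 s2 s3 ` {PT,PA,PB,PL,PC,PR})"
definition kk :: "st \<Rightarrow> st \<Rightarrow> st \<Rightarrow> nat" where
  "kk s1 s2 s3 = 3 + cc s1 s2 s3 - (nc s1 + nc s2 + nc s3)"

lemma gc_nc: "gc s1 s2 s3 \<Longrightarrow> nc s1 + nc s2 + nc s3 \<le> 3 + cc s1 s2 s3"
  by (cases s1; cases s2; cases s3; simp add: gc_def cc_def lab_def card_insert_if)

lemma sumW:
  fixes W :: "st \<Rightarrow> real" and Y :: real
  assumes "W SNl = W SNt" "W SNr = W SNt"
  shows "(\<Sum>s1\<in>UNIV. \<Sum>s2\<in>UNIV. \<Sum>s3\<in>UNIV. if gc s1 s2 s3 \<and> stc s1 s2 s3 = SF then Y ^ kk s1 s2 s3 * W s1 * W s2 * W s3 else 0)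
     = Y * W SF ^ 3 + 6 * W SF ^ 2 * W SNt"
  using assms
  by (simp add: UNIV_st gc_def stc_def kk_def cc_def lab_def stof_def card_insert_if) (simp add: algebra_simps power3_eq_cube power2_eq_square)


lemma rtp_sym: assumes "\<And>a b. R a b \<Longrightarrow> R b a" "R\<^sup>*\<^sup>* x y" shows "R\<^sup>*\<^sup>* y x"
  using assms(2) by (induction rule: rtranclp_induct) (auto intro: converse_rtranclp_into_rtranclp assms(1))

lemma rtp_map: assumes "\<And>a b. R a b \<Longrightarrow> R' (h a) (h b)" "R\<^sup>*\<^sup>* x y" shows "R'\<^sup>*\<^sup>* (h x) (h y)"
  using assms(2) by (induction rule: rtranclp_induct) (auto intro: rtranclp.rtrancl_into_rtrancl assms(1))

lemma rtp_closed: assumes "\<And>a b. R a b \<Longrightarrow> a \<in> X \<Longrightarrow> b \<in> X" "R\<^sup>*\<^sup>* x y" "x \<in> X" shows "y \<in> X"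
  using assms(2,3) by (induction rule: rtranclp_induct) (auto intro: assms(1))

lemma adj_sym: "adj G S u v = adj G S v u"
  unfolding adj_def by auto

lemma conn_equiv: "equiv (verts G) (conn G S)"
proof -
  have s: "(adj G S)\<^sup>*\<^sup>* v u" if "(adj G S)\<^sup>*\<^sup>* u v" for u v
    using rtp_sym[OF _ that] adj_sym by metis
  show ?thesis
    unfolding equiv_def refl_on_def sym_def trans_def conn_def
    using s by (auto intro: rtranclp_trans)
qed

lemma conn_sym: "(u,v) \<in> conn G S \<Longrightarrow> (v,u) \<in> conn G S"
  using conn_equiv[of G S] unfolding equiv_def sym_def by blast
lemma conn_trans: "(u,v) \<in> conn G S \<Longrightarrow> (v,w) \<in> conn G S \<Longrightarrow> (u,w) \<in> conn G S"
  using conn_equiv[of G S] unfolding equiv_def trans_def by blast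
lemma conn_refl: "u \<in> verts G \<Longrightarrow> (u,u) \<in> conn G S"
  unfolding conn_def by simp
lemma conn_in: "(u,v) \<in> conn G S \<Longrightarrow> u \<in> verts G \<and> v \<in> verts G"
  unfolding conn_def by simp

lemma quot_cover:
  assumes "equiv V R" "Q \<subseteq> V" "\<forall>X\<in>V//R. X \<inter> Q \<noteq> {}"
  shows "V//R = (\<lambda>q. R``{q}) ` Q"
proof
  show "(\<lambda>q. R``{q}) ` Q \<subseteq> V//R" using assms(2) by (auto intro: quotientI)
  show "V//R \<subseteq> (\<lambda>q. R``{q}) ` Q"
  proof
    fix X assume X: "X \<in> V//R"
    then obtain x where x: "X = R``{x}" "x \<in> V" by (auto elim: quotientE)
    from assms(3) X obtain q where q: "q \<in> X" "q \<in> Q" by auto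
    then have "(x,q) \<in> R" using x by auto
    then have "R``{x} = R``{q}" using assms(1) by (simp add: equiv_class_eq)
    then show "X \<in> (\<lambda>q. R``{q}) ` Q" using x q by auto
  qed
qed

lemma card_img_le_kernel:
  assumes "finite Q" "\<And>a b. a \<in> Q \<Longrightarrow> b \<in> Q \<Longrightarrow> f a = f b \<Longrightarrow> g a = g b"
  shows "card (g ` Q) \<le> card (f ` Q)"
proof -
  let ?h = "\<lambda>z. g (SOME a. a \<in> Q \<and> f a = z)"
  have "g ` Q = ?h ` (f ` Q)"
  proof (auto)
    fix a assume a: "a \<in> Q"
    have "\<exists>b. b \<in> Q \<and> f b = f a" using a by blast
    then have s: "(SOME b. b \<in> Q \<and> f b = f a) \<in> Q \<and> f (SOME b. b \<in> Q \<and> f b = f a) = f a"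
      by (rule someI_ex)
    then have "g a = ?h (f a)" using assms(2) a by metis
    then show "g a \<in> ?h ` f ` Q" using a by blast
  next
    fix a assume a: "a \<in> Q"
    have "\<exists>b. b \<in> Q \<and> f b = f a" using a by blast
    then have s: "(SOME b. b \<in> Q \<and> f b = f a) \<in> Q \<and> f (SOME b. b \<in> Q \<and> f b = f a) = f a"
      by (rule someI_ex)
    then show "?h (f a) \<in> g ` Q" by blast
  qed
  then show ?thesis using assms(1) by (simp add: card_image_le)
qed

lemma card_img_kernel:
  assumes "finite Q" "\<And>a b. a \<in> Q \<Longrightarrow> b \<in> Q \<Longrightarrow> f a = f b \<longleftrightarrow> g a = g b"
  shows "card (f ` Q) = card (g ` Q)"
proof -
  have "card (g ` Q) \<le> card (f ` Q)" using assms by (intro card_img_le_kernel) auto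
  moreover have "card (f ` Q) \<le> card (g ` Q)" using assms by (intro card_img_le_kernel) auto
  ultimately show ?thesis by simp
qed

definition OG :: "sgraph \<Rightarrow> nat set" where "OG G = {top G, lft G, rgt G}"

definition good :: "sgraph \<Rightarrow> nat set \<Rightarrow> bool" where
  "good G S = (S \<subseteq> edge_ids G \<and> (\<forall>X\<in>verts G // conn G S. X \<inter> OG G \<noteq> {}))"

definition st :: "sgraph \<Rightarrow> nat set \<Rightarrow> st" where
  "st G S = stof ((top G, lft G) \<in> conn G S) ((top G, rgt G) \<in> conn G S) ((lft G, rgt G) \<in> conn G S)"

definition Wt :: "sgraph \<Rightarrow> real \<Rightarrow> st \<Rightarrow> real" where
  "Wt G y s = (\<Sum>S | good G S \<and> st G S = s. (y - 1) ^ nul G S)"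

lemma stof_bool: "(a \<and> b \<longrightarrow> c) \<Longrightarrow> (a \<and> c \<longrightarrow> b) \<Longrightarrow> (b \<and> c \<longrightarrow> a) \<Longrightarrow>
   bTL (stof a b c) = a \<and> bTR (stof a b c) = b \<and> bLR (stof a b c) = c"
  unfolding stof_def by (cases a; cases b; cases c) auto

locale sgl =
  fixes G :: sgraph
  assumes fin: "finite (verts G)"
    and tin: "top G \<in> verts G" and lin: "lft G \<in> verts G" and rin: "rgt G \<in> verts G"
    and tl: "top G \<noteq> lft G" and tr: "top G \<noteq> rgt G" and lr: "lft G \<noteq> rgt G"
    and ein: "\<And>i. i < length (edges G) \<Longrightarrow> fst (edges G ! i) \<in> verts G \<and> snd (edges G ! i) \<in> verts G"
begin

lemma st_bool:
  "bTL (st G S) \<longleftrightarrow> (top G, lft G) \<in> conn G S"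
  "bTR (st G S) \<longleftrightarrow> (top G, rgt G) \<in> conn G S"
  "bLR (st G S) \<longleftrightarrow> (lft G, rgt G) \<in> conn G S"
proof -
  let ?a = "(top G, lft G) \<in> conn G S" and ?b = "(top G, rgt G) \<in> conn G S" and ?c = "(lft G, rgt G) \<in> conn G S"
  have 1: "?c" if a: "?a" and b: "?b" using conn_trans[OF conn_sym[OF a] b] .
  have 2: "?b" if a: "?a" and c: "?c" using conn_trans[OF a c] .
  have 3: "?a" if b: "?b" and c: "?c" using conn_trans[OF b conn_sym[OF c]] .
  show "bTL (st G S) \<longleftrightarrow> ?a" "bTR (st G S) \<longleftrightarrow> ?b" "bLR (st G S) \<longleftrightarrow> ?c"
    unfolding st_def using stof_bool[of ?a ?b ?c] 1 2 3 by blast+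
qed

lemma card_V3: "3 \<le> card (verts G)"
proof -
  have "card {top G, lft G, rgt G} = 3" using tl tr lr by simp
  moreover have "card {top G, lft G, rgt G} \<le> card (verts G)" using tin lin rin by (intro card_mono[OF fin]) simp
  ultimately show ?thesis by simp
qed

lemma fin_quot: "finite (verts G // conn G S)"
  using fin by (rule finite_quotient) (auto simp: conn_def)

lemma ncomp_le: "ncomp G S \<le> card (verts G)"
proof -
  have "verts G // conn G S = (\<lambda>q. conn G S``{q}) ` verts G"
    unfolding quotient_def by auto
  then show ?thesis unfolding ncomp_def using fin card_image_le by metis
qed

lemma ncomp_ge1: "1 \<le> ncomp G S"
proof -
  have "conn G S``{top G} \<in> verts G // conn G S" using tin by (rule quotientI)
  then have ne: "verts G // conn G S \<noteq> {}" by (metis empty_iff)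
  have "card (verts G // conn G S) > 0" using fin_quot[of S] ne card_gt_0_iff by blast
  then show ?thesis unfolding ncomp_def by linarith
qed

lemma ncomp_good: assumes "good G S" shows "ncomp G S = nc (st G S)"
proof -
  let ?R = "conn G S"
  have eq: "verts G // ?R = (\<lambda>q. ?R``{q}) ` OG G"
  proof -
    have "OG G \<subseteq> verts G" using tin lin rin by (simp add: OG_def)
    then show ?thesis using quot_cover[OF conn_equiv[of G S]] assms unfolding good_def by blast
  qed
  have ce: "?R``{a} = ?R``{b} \<longleftrightarrow> (a,b) \<in> ?R" if "a \<in> verts G" "b \<in> verts G" for a b
    using eq_equiv_class_iff[OF conn_equiv that] .
  have "ncomp G S = card {?R``{top G}, ?R``{lft G}, ?R``{rgt G}}"
    unfolding ncomp_def eq OG_def by simp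
  also have "\<dots> = nc (st G S)"
  proof -
    have e1: "?R``{top G} = ?R``{lft G} \<longleftrightarrow> bTL (st G S)" using ce tin lin st_bool(1) by blast
    have e2: "?R``{top G} = ?R``{rgt G} \<longleftrightarrow> bTR (st G S)" using ce tin rin st_bool(2) by blast
    have e3: "?R``{lft G} = ?R``{rgt G} \<longleftrightarrow> bLR (st G S)" using ce lin rin st_bool(3) by blast
    show ?thesis
    proof (cases "st G S")
      case SF then show ?thesis using e1 e2 e3 by simp
    next
      case SNt then show ?thesis using e1 e2 e3 by (simp add: card_insert_if)
    next
      case SNl then show ?thesis using e1 e2 e3 by (simp add: card_insert_if)
    next
      case SNr then show ?thesis using e1 e2 e3 by (simp add: card_insert_if)
    next
      case SM then show ?thesis using e1 e2 e3 by (simp add: card_insert_if)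
    qed
  qed
  finally show ?thesis .
qed

end


lemma ex_pt: "(\<exists>x. P x) \<longleftrightarrow> P PT \<or> P PA \<or> P PB \<or> P PL \<or> P PC \<or> P PR"
  by (metis pt.exhaust)

lemma adj_in: assumes "\<And>i. i < length (edges G) \<Longrightarrow> fst (edges G ! i) \<in> verts G \<and> snd (edges G ! i) \<in> verts G"
  "adj G S a b" shows "a \<in> verts G \<and> b \<in> verts G"
  using assms unfolding adj_def by (metis fst_conv snd_conv)

lemma rtp_sub: assumes "\<And>a b. R a b \<Longrightarrow> R'\<^sup>*\<^sup>* a b" "R\<^sup>*\<^sup>* x y" shows "R'\<^sup>*\<^sup>* x y"
  using assms(2) by (induction rule: rtranclp_induct) (auto intro: rtranclp_trans assms(1))

lemma m3: "3*(a::nat) \<noteq> 3*(b::nat)+1" "3*(a::nat) \<noteq> Suc (3*(b::nat))" "3*(a::nat) \<noteq> 3*(b::nat)+2" "3*(a::nat) \<noteq> Suc (Suc (3*(b::nat)))" "3*(a::nat)+1 \<noteq> 3*(b::nat)" "Suc (3*(a::nat)) \<noteq> 3*(b::nat)" "3*(a::nat)+1 \<noteq> 3*(b::nat)+2" "3*(a::nat)+1 \<noteq> Suc (Suc (3*(b::nat)))" "Suc (3*(a::nat)) \<noteq> 3*(b::nat)+2" "Suc (3*(a::nat)) \<noteq> Suc (Suc (3*(b::nat)))" "3*(a::nat)+2 \<noteq> 3*(b::nat)" "Suc (Suc (3*(a::nat))) \<noteq> 3*(b::nat)" "3*(a::nat)+2 \<noteq> 3*(b::nat)+1" "3*(a::nat)+2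 \<noteq> Suc (3*(b::nat))" "Suc (Suc (3*(a::nat))) \<noteq> 3*(b::nat)+1" "Suc (Suc (3*(a::nat))) \<noteq> Suc (3*(b::nat))"
  by presburger+

lemma lt3: "i < (3::nat) \<Longrightarrow> i = 0 \<or> i = 1 \<or> i = 2" by auto

context sgl begin

definition fc :: "nat \<Rightarrow> nat \<Rightarrow> nat" where
  "fc i v = (if i = 0 then 3*v else if i = 1 then (if v = top G then 3 * lft G else 3*v+1)
            else (if v = top G then 3 * rgt G else if v = lft G then 3 * rgt G + 1 else 3*v+2))"

definition pip :: "pt \<Rightarrow> nat" where
  "pip x = (case x of PT \<Rightarrow> 3 * top G | PA \<Rightarrow> 3 * lft G | PB \<Rightarrow> 3 * rgt G
     | PL \<Rightarrow> 3 * lft G + 1 | PC \<Rightarrow> 3 * rgt G + 1 | PR \<Rightarrow> 3 * rgt G + 2)"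

definition ov :: "nat \<Rightarrow> nat" where
  "ov k = (if k = 0 then top G else if k = 1 then lft G else rgt G)"

definition sel :: "nat \<Rightarrow> nat set \<Rightarrow> nat set" where
  "sel i S' = {j. j < length (edges G) \<and> i * length (edges G) + j \<in> S'}"

definition Ci :: "nat \<Rightarrow> nat set \<Rightarrow> nat \<Rightarrow> nat \<Rightarrow> bool" where
  "Ci i S' u v = (\<exists>a b. u = fc i a \<and> v = fc i b \<and> (a,b) \<in> conn G (sel i S'))"

definition CC :: "nat set \<Rightarrow> nat \<Rightarrow> nat \<Rightarrow> bool" where
  "CC S' u v = (\<exists>i<3. Ci i S' u v)"

lemma fc0: "fc 0 = (\<lambda>v. 3*v)" by (rule ext) (simp add: fc_def)
lemma fc1: "fc 1 = (\<lambda>v. if v = top G then 3 * lft G else 3*v+1)" by (rule ext) (simp add: fc_def)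
lemma fc2: "fc 2 = (\<lambda>v. if v = top G then 3 * rgt G else if v = lft G then 3 * rgt G + 1 else 3*v+2)"
  by (rule ext) (simp add: fc_def)

lemma G'_verts: "verts (sier_step G) = fc 0 ` verts G \<union> fc 1 ` verts G \<union> fc 2 ` verts G"
  unfolding sier_step_def Let_def fc0 fc1 fc2 by simp
lemma G'_edges: "edges (sier_step G) = map (map_prod (fc 0) (fc 0)) (edges G)
   @ map (map_prod (fc 1) (fc 1)) (edges G) @ map (map_prod (fc 2) (fc 2)) (edges G)"
  unfolding sier_step_def Let_def fc0 fc1 fc2 by simp
lemma G'_top: "top (sier_step G) = pip PT" and G'_lft: "lft (sier_step G) = pip PL"
  and G'_rgt: "rgt (sier_step G) = pip PR"
  unfolding sier_step_def Let_def pip_def using tl tr lr by auto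

lemma fc_inj: "inj (fc i)"
  unfolding inj_def fc_def using tl by (auto simp: m3 split: if_splits)

lemma fc_ov: "i < 3 \<Longrightarrow> k < 3 \<Longrightarrow> fc i (ov k) = pip (qp i k)"
  using tl tr lr unfolding numeral_3_eq_3
  by (auto simp: fc_def ov_def pip_def qp_def less_Suc_eq)

lemma fc_pip: assumes "i < 3" "fc i a = pip x" shows "\<exists>k<3. a = ov k \<and> x = qp i k"
  using lt3[OF assms(1)] assms(2) tl tr lr unfolding ex3
  by (cases x; elim disjE; auto simp: fc_def ov_def pip_def qp_def m3 split: if_splits)

lemma fc_meet: assumes "i < 3" "j < 3" "i \<noteq> j" "fc i a = fc j b" shows "\<exists>x. fc i a = pip x"
  using lt3[OF assms(1)] lt3[OF assms(2)] assms(3,4) tl tr lr unfolding ex_pt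
  by (elim disjE; auto simp: fc_def pip_def m3 split: if_splits)

end


context sgl begin

lemma edges_len: "length (edges (sier_step G)) = 3 * length (edges G)"
  by (simp add: G'_edges)

lemma edges_nth:
  assumes "k < 3 * length (edges G)"
  shows "edges (sier_step G) ! k = map_prod (fc (k div length (edges G))) (fc (k div length (edges G))) (edges G ! (k mod length (edges G)))"
proof -
  let ?m = "length (edges G)"
  have m: "?m > 0" using assms by auto
  consider "k < ?m" | "?m \<le> k" "k < 2 * ?m" | "2 * ?m \<le> k" by linarith
  then show ?thesis
  proof cases
    case 1 then show ?thesis by (simp add: G'_edges nth_append)
  next
    case 2
    then obtain j where j: "k = ?m + j" "j < ?m" by (metis add.commute le_add_diff_inverse2 less_diff_conv2 mult_2)
    then have "k div ?m = 1" "k mod ?m = j" using m by auto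
    then show ?thesis using j by (simp add: G'_edges nth_append)
  next
    case 3
    then obtain j where j: "k = 2 * ?m + j" "j < ?m" using assms by (metis add.commute le_add_diff_inverse2 less_diff_conv2 mult_2 mult_Suc numeral_2_eq_2 numeral_3_eq_3)
    then have "k div ?m = 2" "k mod ?m = j" using m by (auto simp: mult_2 add.assoc)
    then show ?thesis using j by (simp add: G'_edges nth_append)
  qed
qed

lemma adj_G': "adj (sier_step G) S' u v \<longleftrightarrow> (\<exists>i<3. \<exists>a b. u = fc i a \<and> v = fc i b \<and> adj G (sel i S') a b)"
proof
  let ?m = "length (edges G)"
  assume "adj (sier_step G) S' u v"
  then obtain k where k: "k \<in> S'" "k < 3 * ?m"
    and e: "edges (sier_step G) ! k = (u,v) \<or> edges (sier_step G) ! k = (v,u)"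
    unfolding adj_def edges_len by blast
  define i where "i = k div ?m"
  define j where "j = k mod ?m"
  have m: "?m > 0" using k by auto
  have ij: "i < 3" "j < ?m" "k = i * ?m + j" using k m by (auto simp: i_def j_def less_mult_imp_div_less)
  then have js: "j \<in> sel i S'" using k by (simp add: sel_def)
  obtain a b where ab: "edges G ! j = (a,b)" by fastforce
  have ek: "edges (sier_step G) ! k = (fc i a, fc i b)" using edges_nth[OF k(2)] ab by (simp add: i_def j_def)
  show "\<exists>i<3. \<exists>a b. u = fc i a \<and> v = fc i b \<and> adj G (sel i S') a b"
  proof (cases "edges (sier_step G) ! k = (u,v)")
    case True
    then have "u = fc i a" "v = fc i b" using ek by auto
    moreover have "adj G (sel i S') a b" unfolding adj_def using js ij ab by auto
    ultimately show ?thesis using ij by blast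
  next
    case False
    then have "u = fc i b" "v = fc i a" using ek e by auto
    moreover have "adj G (sel i S') b a" unfolding adj_def using js ij ab by auto
    ultimately show ?thesis using ij by blast
  qed
next
  let ?m = "length (edges G)"
  assume "\<exists>i<3. \<exists>a b. u = fc i a \<and> v = fc i b \<and> adj G (sel i S') a b"
  then obtain i a b where i: "i < 3" "u = fc i a" "v = fc i b" "adj G (sel i S') a b" by blast
  then obtain j where j: "j \<in> sel i S'" "edges G ! j = (a,b) \<or> edges G ! j = (b,a)"
    unfolding adj_def by blast
  have jm: "j < ?m" "i * ?m + j \<in> S'" using j by (auto simp: sel_def)
  define k where "k = i * ?m + j"
  have kb: "k < 3 * ?m"
  proof -
    have "i * ?m + j < i * ?m + ?m" using jm by simp
    also have "\<dots> = (i+1) * ?m" by simp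
    also have "\<dots> \<le> 3 * ?m" using i by (intro mult_right_mono) auto
    finally show ?thesis by (simp add: k_def)
  qed
  have m0: "?m \<noteq> 0" using jm by auto
  have "k div ?m = i" "k mod ?m = j" using jm m0 by (auto simp: k_def add.commute[of "i * ?m"])
  then have ek: "edges (sier_step G) ! k = map_prod (fc i) (fc i) (edges G ! j)"
    using edges_nth[OF kb] by simp
  show "adj (sier_step G) S' u v"
    unfolding adj_def edges_len using kb jm(2) ek j(2) i by (auto simp: k_def)
qed

lemma ein': "adj G S a b \<Longrightarrow> a \<in> verts G \<and> b \<in> verts G"
  using adj_in[OF ein] by blast

lemma conn_G': "conn (sier_step G) S' = {(u,v). u \<in> verts (sier_step G) \<and> v \<in> verts (sier_step G) \<and> (CC S')\<^sup>*\<^sup>* u v}"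
proof -
  have 1: "CC S' u v" if a: "adj (sier_step G) S' u v" for u v
  proof -
    obtain i a b where "i<3" "u = fc i a" "v = fc i b" "adj G (sel i S') a b" using a adj_G' by blast
    moreover then have "(a,b) \<in> conn G (sel i S')" using ein' unfolding conn_def by blast
    ultimately show ?thesis unfolding CC_def Ci_def by blast
  qed
  have 2: "(adj (sier_step G) S')\<^sup>*\<^sup>* u v" if a: "CC S' u v" for u v
  proof -
    obtain i a b where i: "i<3" "u = fc i a" "v = fc i b" "(a,b) \<in> conn G (sel i S')"
      using a unfolding CC_def Ci_def by blast
    have "(adj G (sel i S'))\<^sup>*\<^sup>* a b" using i(4) unfolding conn_def by blast
    then have "(adj (sier_step G) S')\<^sup>*\<^sup>* (fc i a) (fc i b)"
      by (rule rtp_map[rotated]) (use i(1) adj_G' in blast)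
    then show ?thesis using i by simp
  qed
  have 3: "(CC S')\<^sup>*\<^sup>* u v" if "(adj (sier_step G) S')\<^sup>*\<^sup>* u v" for u v
    using that by (rule rtp_sub[rotated]) (use 1 in blast)
  have 4: "(adj (sier_step G) S')\<^sup>*\<^sup>* u v" if "(CC S')\<^sup>*\<^sup>* u v" for u v
    using that by (rule rtp_sub[rotated]) (use 2 in blast)
  show ?thesis unfolding conn_def using 3 4 by blast
qed

lemma Ci_in: "Ci i S' u v \<Longrightarrow> u \<in> fc i ` verts G \<and> v \<in> fc i ` verts G"
  unfolding Ci_def using conn_in by blast

lemma Ci_trans: "Ci i S' u v \<Longrightarrow> Ci i S' v w \<Longrightarrow> Ci i S' u w"
  unfolding Ci_def using fc_inj[of i] conn_trans by (metis injD)

lemma Ci_refl: "a \<in> verts G \<Longrightarrow> Ci i S' (fc i a) (fc i a)"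
  unfolding Ci_def using conn_refl by blast

lemma pip_fc: "\<exists>i<3. \<exists>k<3. pip x = fc i (ov k)"
proof -
  have "\<exists>i<3. \<exists>k<3. x = qp i k" unfolding ex3 by (cases x) (auto simp: qp_def)
  then show ?thesis using fc_ov by metis
qed

lemma ov_in: "ov k \<in> verts G"
  using tin lin rin by (simp add: ov_def)

lemma pip_in: "pip x \<in> verts (sier_step G)"
  using pip_fc[of x] ov_in unfolding G'_verts ex3 by auto

lemma V'_fc: "u \<in> verts (sier_step G) \<longleftrightarrow> (\<exists>i<3. \<exists>a\<in>verts G. u = fc i a)"
  unfolding G'_verts ex3 by auto

lemma rel_vals: "rel s k k" "rel s 0 1 = bTL s" "rel s 1 0 = bTL s" "rel s 0 2 = bTR s" "rel s 2 0 = bTR s"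
  "rel s 1 2 = bLR s" "rel s 2 1 = bLR s"
  by (auto simp: rel_def doubleton_eq_iff)

lemma conn_sym_iff: "(u,v) \<in> conn G S \<longleftrightarrow> (v,u) \<in> conn G S"
  using conn_sym by blast

lemma rel_conn: assumes "k < 3" "k' < 3" shows "rel (st G S) k k' \<longleftrightarrow> (ov k, ov k') \<in> conn G S"
proof -
  have o: "ov 0 = top G" "ov 1 = lft G" "ov 2 = rgt G" by (auto simp: ov_def)
  show ?thesis
  using lt3[OF assms(1)] lt3[OF assms(2)]
  apply (elim disjE)
  apply (simp_all only: o rel_vals st_bool conn_refl[OF tin] conn_refl[OF lin] conn_refl[OF rin])
  apply (simp_all add: conn_sym_iff[of "lft G" "top G"] conn_sym_iff[of "rgt G" "top G"] conn_sym_iff[of "rgt G" "lft G"])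
  done
qed

abbreviation "ss S' \<equiv> (st G (sel 0 S'), st G (sel 1 S'), st G (sel 2 S'))"
abbreviation "EE S' \<equiv> Eabs (st G (sel 0 S')) (st G (sel 1 S')) (st G (sel 2 S'))"
abbreviation "LL S' \<equiv> lab (st G (sel 0 S')) (st G (sel 1 S')) (st G (sel 2 S'))"

lemma sts_sel: "i < 3 \<Longrightarrow> sts (st G (sel 0 S')) (st G (sel 1 S')) (st G (sel 2 S')) i = st G (sel i S')"
  by (drule lt3) (auto simp: sts_def)

lemma CC_pip: "CC S' (pip x) (pip y) \<longleftrightarrow> EE S' x y"
proof
  assume "CC S' (pip x) (pip y)"
  then obtain i a b where i: "i<3" "pip x = fc i a" "pip y = fc i b" "(a,b) \<in> conn G (sel i S')"
    unfolding CC_def Ci_def by blast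
  obtain k k' where "k<3" "a = ov k" "x = qp i k" "k'<3" "b = ov k'" "y = qp i k'"
    using fc_pip[OF i(1) i(2)[symmetric]] fc_pip[OF i(1) i(3)[symmetric]] by blast
  then show "EE S' x y" unfolding Eabs_def using i rel_conn sts_sel by metis
next
  assume "EE S' x y"
  then obtain i k k' where i: "i<3" "k<3" "k'<3" "x = qp i k" "y = qp i k'"
     "rel (st G (sel i S')) k k'"
    unfolding Eabs_def using sts_sel by metis
  then have "(ov k, ov k') \<in> conn G (sel i S')" using rel_conn by blast
  then show "CC S' (pip x) (pip y)" unfolding CC_def Ci_def using i fc_ov by metis
qed

end


context sgl begin

lemma path:
  assumes "(CC S')\<^sup>*\<^sup>* u v" "u \<in> verts (sier_step G)"
  shows "(\<exists>i<3. Ci i S' u v) \<or> (\<exists>x y. (\<exists>i<3. Ci i S' u (pip x)) \<and> (EE S')\<^sup>*\<^sup>* x y \<and> (\<exists>j<3. Ci j S' (pip y) v))"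
  using assms(1)
proof (induction rule: rtranclp_induct)
  case base
  then show ?case using assms(2) Ci_refl unfolding V'_fc by blast
next
  case (step v w)
  from step(2) obtain k where k: "k < 3" "Ci k S' v w" unfolding CC_def by blast
  from step(3) show ?case
  proof
    assume "\<exists>i<3. Ci i S' u v"
    then obtain i where i: "i < 3" "Ci i S' u v" by blast
    show ?case
    proof (cases "i = k")
      case True then show ?thesis using i k Ci_trans by blast
    next
      case False
      obtain a b where "v = fc i a" "v = fc k b" using Ci_in[OF i(2)] Ci_in[OF k(2)] by blast
      then obtain z where z: "v = pip z" using fc_meet[OF i(1) k(1) False] by metis
      show ?thesis using i k z by blast
    qed
  next
    assume "\<exists>x y. (\<exists>i<3. Ci i S' u (pip x)) \<and> (EE S')\<^sup>*\<^sup>* x y \<and> (\<exists>j<3. Ci j S' (pip y) v)"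
    then obtain x y i j where h: "i<3" "Ci i S' u (pip x)" "(EE S')\<^sup>*\<^sup>* x y" "j<3" "Ci j S' (pip y) v"
      by blast
    show ?case
    proof (cases "j = k")
      case True then show ?thesis using h k Ci_trans by blast
    next
      case False
      obtain a b where "v = fc j a" "v = fc k b" using Ci_in[OF h(5)] Ci_in[OF k(2)] by blast
      then obtain z where z: "v = pip z" using fc_meet[OF h(4) k(1) False] by metis
      have "CC S' (pip y) (pip z)" using h(4,5) z unfolding CC_def by blast
      then have "EE S' y z" using CC_pip by blast
      then have "(EE S')\<^sup>*\<^sup>* x z" using h(3) by (rule rtranclp.rtrancl_into_rtrancl[rotated])
      then show ?thesis using h(1,2) k z by blast
    qed
  qed
qed

lemma conn_pip: "(pip x, pip y) \<in> conn (sier_step G) S' \<longleftrightarrow> LL S' x = LL S' y"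
proof
  assume "LL S' x = LL S' y"
  then have "(EE S')\<^sup>*\<^sup>* x y" using rt_iff by blast
  then have "(CC S')\<^sup>*\<^sup>* (pip x) (pip y)"
    by (rule rtp_map[rotated]) (use CC_pip in blast)
  then show "(pip x, pip y) \<in> conn (sier_step G) S'" unfolding conn_G' using pip_in by blast
next
  assume "(pip x, pip y) \<in> conn (sier_step G) S'"
  then have "(CC S')\<^sup>*\<^sup>* (pip x) (pip y)" unfolding conn_G' by blast
  from path[OF this pip_in] have "(EE S')\<^sup>*\<^sup>* x y"
  proof
    assume "\<exists>i<3. Ci i S' (pip x) (pip y)"
    then have "EE S' x y" using CC_pip unfolding CC_def by blast
    then show ?thesis by blast
  next
    assume "\<exists>x' y'. (\<exists>i<3. Ci i S' (pip x) (pip x')) \<and> (EE S')\<^sup>*\<^sup>* x' y' \<and> (\<exists>j<3. Ci j S' (pip y') (pip y))"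
    then obtain x' y' where h: "EE S' x x'" "(EE S')\<^sup>*\<^sup>* x' y'" "EE S' y' y"
      using CC_pip unfolding CC_def by blast
    show ?thesis using h by (meson converse_rtranclp_into_rtranclp rtranclp.rtrancl_into_rtrancl)
  qed
  then show "LL S' x = LL S' y" using rt_iff by blast
qed

lemma escape:
  assumes "i < 3" "a \<in> verts G" "i' < 3" "Ci i' S' (fc i a) (pip x)"
  shows "\<exists>k<3. (a, ov k) \<in> conn G (sel i S')"
proof -
  obtain a' b' where h: "fc i a = fc i' a'" "pip x = fc i' b'" "(a',b') \<in> conn G (sel i' S')"
    using assms(4) unfolding Ci_def by blast
  show ?thesis
  proof (cases "i = i'")
    case True
    then have "a = a'" using h(1) fc_inj[of i] by (simp add: inj_eq)
    moreover obtain k where "k<3" "b' = ov k" using fc_pip[OF assms(3) h(2)[symmetric]] by blast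
    ultimately show ?thesis using h(3) True by blast
  next
    case False
    obtain z where "fc i a = pip z" using fc_meet[OF assms(1,3) False h(1)] by blast
    then obtain k where "k<3" "a = ov k" using fc_pip[OF assms(1)] by blast
    then show ?thesis using conn_refl[OF assms(2)] by blast
  qed
qed

lemma OG'_eq: "OG (sier_step G) = pip ` {PT, PL, PR}"
  by (simp add: OG_def G'_top G'_lft G'_rgt)

lemma OG_ov: "OG G = ov ` {0,1,2}"
  by (auto simp: OG_def ov_def)

lemma sel_sub: "sel i S' \<subseteq> edge_ids G"
  by (auto simp: sel_def edge_ids_def)

lemma good_G':
  assumes "S' \<subseteq> edge_ids (sier_step G)"
  shows "good (sier_step G) S' \<longleftrightarrow> (\<forall>i<3. good G (sel i S')) \<and> gc (st G (sel 0 S')) (st G (sel 1 S')) (st G (sel 2 S'))"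
proof
  assume g: "good (sier_step G) S'"
  let ?R' = "conn (sier_step G) S'"
  have meet: "\<exists>w\<in>{PT,PL,PR}. (u, pip w) \<in> ?R'" if "u \<in> verts (sier_step G)" for u
  proof -
    have "?R'``{u} \<in> verts (sier_step G) // ?R'" using that by (rule quotientI)
    then have "?R'``{u} \<inter> OG (sier_step G) \<noteq> {}" using g unfolding good_def by blast
    then show ?thesis unfolding OG'_eq by blast
  qed
  have "gc (st G (sel 0 S')) (st G (sel 1 S')) (st G (sel 2 S'))"
    unfolding gc_def
  proof
    fix x :: pt
    obtain w where "w \<in> {PT,PL,PR}" "(pip x, pip w) \<in> ?R'" using meet[OF pip_in] by blast
    then show "LL S' x \<in> {LL S' PT, LL S' PL, LL S' PR}" using conn_pip by blast
  qed
  moreover have "good G (sel i S')" if i: "i < 3" for i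
    unfolding good_def
  proof (intro conjI sel_sub ballI)
    fix Y assume "Y \<in> verts G // conn G (sel i S')"
    then obtain a where a: "Y = conn G (sel i S')``{a}" "a \<in> verts G" by (auto elim: quotientE)
    have u: "fc i a \<in> verts (sier_step G)" using a i unfolding V'_fc by blast
    obtain w where "(fc i a, pip w) \<in> ?R'" using meet[OF u] by blast
    then have "(CC S')\<^sup>*\<^sup>* (fc i a) (pip w)" unfolding conn_G' by blast
    from path[OF this u] obtain i' x where "i' < 3" "Ci i' S' (fc i a) (pip x)" by blast
    from escape[OF i a(2) this] obtain k where "k<3" "(a, ov k) \<in> conn G (sel i S')" by blast
    moreover have "ov k \<in> OG G" using lt3[OF \<open>k<3\<close>] by (auto simp: OG_def ov_def)
    ultimately show "Y \<inter> OG G \<noteq> {}" using a by blast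
  qed
  ultimately show "(\<forall>i<3. good G (sel i S')) \<and> gc (st G (sel 0 S')) (st G (sel 1 S')) (st G (sel 2 S'))"
    by blast
next
  assume h: "(\<forall>i<3. good G (sel i S')) \<and> gc (st G (sel 0 S')) (st G (sel 1 S')) (st G (sel 2 S'))"
  let ?R' = "conn (sier_step G) S'"
  show "good (sier_step G) S'"
    unfolding good_def
  proof (intro conjI assms ballI)
    fix X assume "X \<in> verts (sier_step G) // ?R'"
    then obtain u where u: "X = ?R'``{u}" "u \<in> verts (sier_step G)" by (auto elim: quotientE)
    then obtain i a where ia: "i < 3" "a \<in> verts G" "u = fc i a" unfolding V'_fc by blast
    have "conn G (sel i S')``{a} \<in> verts G // conn G (sel i S')" using ia(2) by (rule quotientI)
    then have "conn G (sel i S')``{a} \<inter> OG G \<noteq> {}" using h ia(1) unfolding good_def by blast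
    then obtain w where w: "w \<in> OG G" "(a, w) \<in> conn G (sel i S')" by blast
    then obtain k where k0: "k \<in> {0,1,2}" "w = ov k" unfolding OG_ov by blast
    then have k: "k < 3" "(a, ov k) \<in> conn G (sel i S')" using w by auto
    have "Ci i S' u (pip (qp i k))" using k ia fc_ov unfolding Ci_def by metis
    then have "(CC S')\<^sup>*\<^sup>* u (pip (qp i k))" using ia(1) unfolding CC_def by blast
    then have 1: "(u, pip (qp i k)) \<in> ?R'" unfolding conn_G' using u(2) pip_in by blast
    have "LL S' (qp i k) \<in> {LL S' PT, LL S' PL, LL S' PR}"
      using h unfolding gc_def by (cases "qp i k") auto
    then obtain w where o: "w \<in> {PT,PL,PR}" "LL S' (qp i k) = LL S' w" by blast
    then have "(pip (qp i k), pip w) \<in> ?R'" using conn_pip by blast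
    then have "(u, pip w) \<in> ?R'" using 1 conn_trans by blast
    then have "pip w \<in> X \<inter> OG (sier_step G)" using u(1) o(1) unfolding OG'_eq by blast
    then show "X \<inter> OG (sier_step G) \<noteq> {}" by blast
  qed
qed

lemma st_G': "st (sier_step G) S' = stc (st G (sel 0 S')) (st G (sel 1 S')) (st G (sel 2 S'))"
  unfolding st_def stc_def G'_top G'_lft G'_rgt conn_pip ..

lemma finV: "finite (verts (sier_step G))"
  using fin by (simp add: G'_verts)

lemma ncomp_G':
  assumes "good (sier_step G) S'"
  shows "ncomp (sier_step G) S' = cc (st G (sel 0 S')) (st G (sel 1 S')) (st G (sel 2 S'))"
proof -
  let ?R' = "conn (sier_step G) S'"
  let ?P = "{PT,PA,PB,PL,PC,PR}"
  have sub: "pip ` ?P \<subseteq> verts (sier_step G)" using pip_in by blast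
  have cov: "\<forall>X\<in>verts (sier_step G) // ?R'. X \<inter> pip ` ?P \<noteq> {}"
    using assms unfolding good_def OG'_eq by blast
  have "ncomp (sier_step G) S' = card ((\<lambda>q. ?R'``{q}) ` pip ` ?P)"
    unfolding ncomp_def using quot_cover[OF conn_equiv sub cov] by simp
  also have "\<dots> = card ((\<lambda>x. ?R'``{pip x}) ` ?P)" by (simp add: image_image)
  also have "\<dots> = card (LL S' ` ?P)"
  proof (rule card_img_kernel)
    fix a b assume "a \<in> ?P" "b \<in> ?P"
    show "(?R'``{pip a} = ?R'``{pip b}) = (LL S' a = LL S' b)"
      using eq_equiv_class_iff[OF conn_equiv pip_in pip_in] conn_pip by blast
  qed simp
  finally show ?thesis unfolding cc_def .
qed

end


definition forest :: "sgraph \<Rightarrow> bool" where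
  "forest G = (\<forall>S. good G S \<longrightarrow> rk G S \<le> card S)"

lemma finite_st: "finite (UNIV :: st set)" by (simp add: UNIV_st)

lemma all3: "(\<forall>i<(3::nat). P i) \<longleftrightarrow> P 0 \<and> P 1 \<and> P 2"
  using lt3 by fastforce

lemma nc_le3: "nc s \<le> 3" by (cases s) auto

lemma cc_le6: "cc s1 s2 s3 \<le> 6"
proof -
  have "cc s1 s2 s3 \<le> card {PT,PA,PB,PL,PC,PR}" unfolding cc_def by (rule card_image_le) simp
  then show ?thesis by simp
qed

lemma qp_vals: "k < 3 \<Longrightarrow> qp 0 k \<in> {PT,PA,PB}" "k < 3 \<Longrightarrow> qp 1 k \<in> {PA,PL,PC}" "k < 3 \<Longrightarrow> qp 2 k \<in> {PB,PC,PR}"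
  by (auto simp: qp_def)

context sgl begin

lemma card_fc: "card (fc i ` verts G) = card (verts G)"
  using fc_inj[of i] by (simp add: card_image inj_on_subset)

lemma meet_pip: assumes "i < 3" "j < 3" "i \<noteq> j" "u \<in> fc i ` verts G" "u \<in> fc j ` verts G"
  shows "\<exists>z. u = pip z \<and> (\<exists>k<3. z = qp i k) \<and> (\<exists>k<3. z = qp j k)"
proof -
  obtain a b where ab: "u = fc i a" "u = fc j b" using assms(4,5) by blast
  obtain z where z: "u = pip z" using fc_meet[OF assms(1,2,3)] ab by metis
  show ?thesis using fc_pip[OF assms(1)] fc_pip[OF assms(2)] ab z by metis
qed

lemma pip_inj: "inj pip"
  unfolding inj_def pip_def using tl tr lr by (auto split: pt.splits; presburger)

lemma int01: "fc 0 ` verts G \<inter> fc 1 ` verts G = {pip PA}"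
proof
  show "fc 0 ` verts G \<inter> fc 1 ` verts G \<subseteq> {pip PA}"
  proof
    fix u assume "u \<in> fc 0 ` verts G \<inter> fc 1 ` verts G"
    then obtain z where "u = pip z" "\<exists>k<3. z = qp 0 k" "\<exists>k<3. z = qp 1 k" using meet_pip[of 0 1 u] by auto
    then show "u \<in> {pip PA}" using qp_vals by fastforce
  qed
  have e: "pip PA = fc 0 (ov 1)" "pip PA = fc 1 (ov 0)" using fc_ov[of 0 1] fc_ov[of 1 0] by (auto simp: qp_def)
  have "pip PA \<in> fc 0 ` verts G" using ov_in[of 1] e(1) by (metis image_eqI)
  moreover have "pip PA \<in> fc 1 ` verts G" using ov_in[of 0] e(2) by (metis image_eqI)
  ultimately show "{pip PA} \<subseteq> fc 0 ` verts G \<inter> fc 1 ` verts G" by simp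
qed

lemma int2: "(fc 0 ` verts G \<union> fc 1 ` verts G) \<inter> fc 2 ` verts G = {pip PB, pip PC}"
proof
  show "(fc 0 ` verts G \<union> fc 1 ` verts G) \<inter> fc 2 ` verts G \<subseteq> {pip PB, pip PC}"
  proof
    fix u assume u: "u \<in> (fc 0 ` verts G \<union> fc 1 ` verts G) \<inter> fc 2 ` verts G"
    show "u \<in> {pip PB, pip PC}"
    proof (cases "u \<in> fc 0 ` verts G")
      case True
      then obtain z where "u = pip z" "\<exists>k<3. z = qp 0 k" "\<exists>k<3. z = qp 2 k" using u meet_pip[of 0 2 u] by auto
      then show ?thesis using qp_vals by fastforce
    next
      case False
      then obtain z where "u = pip z" "\<exists>k<3. z = qp 1 k" "\<exists>k<3. z = qp 2 k" using u meet_pip[of 1 2 u] by auto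
      then show ?thesis using qp_vals by fastforce
    qed
  qed
  have e: "pip PB = fc 0 (ov 2)" "pip PB = fc 2 (ov 0)" "pip PC = fc 1 (ov 2)" "pip PC = fc 2 (ov 1)"
    using fc_ov[of 0 2] fc_ov[of 2 0] fc_ov[of 1 2] fc_ov[of 2 1] by (auto simp: qp_def)
  have "pip PB \<in> fc 0 ` verts G" using ov_in[of 2] e(1) by (metis image_eqI)
  moreover have "pip PB \<in> fc 2 ` verts G" using ov_in[of 0] e(2) by (metis image_eqI)
  moreover have "pip PC \<in> fc 1 ` verts G" using ov_in[of 2] e(3) by (metis image_eqI)
  moreover have "pip PC \<in> fc 2 ` verts G" using ov_in[of 1] e(4) by (metis image_eqI)
  ultimately show "{pip PB, pip PC} \<subseteq> (fc 0 ` verts G \<union> fc 1 ` verts G) \<inter> fc 2 ` verts G" by simp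
qed

lemma card_V': "card (verts (sier_step G)) = 3 * card (verts G) - 3"
proof -
  let ?v = "card (verts G)"
  have f: "finite (fc i ` verts G)" for i using fin by simp
  have 1: "card (fc 0 ` verts G \<union> fc 1 ` verts G) = 2 * ?v - 1"
    using card_Un_Int[OF f f, of 0 1] card_fc int01 card_V3 by simp
  have d: "pip PB \<noteq> pip PC" using pip_inj by (simp add: inj_eq)
  have 2: "card (fc 0 ` verts G \<union> fc 1 ` verts G \<union> fc 2 ` verts G) = (2 * ?v - 1) + ?v - 2"
    using card_Un_Int[of "fc 0 ` verts G \<union> fc 1 ` verts G" "fc 2 ` verts G"] f 1 card_fc int2 d by simp
  show ?thesis unfolding G'_verts 2 using card_V3 by simp
qed

lemma sgl_G': "sgl (sier_step G)"
proof
  show "finite (verts (sier_step G))" by (rule finV)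
  show "top (sier_step G) \<in> verts (sier_step G)" "lft (sier_step G) \<in> verts (sier_step G)"
    "rgt (sier_step G) \<in> verts (sier_step G)" unfolding G'_top G'_lft G'_rgt by (rule pip_in)+
  show "top (sier_step G) \<noteq> lft (sier_step G)" "top (sier_step G) \<noteq> rgt (sier_step G)"
    "lft (sier_step G) \<noteq> rgt (sier_step G)" unfolding G'_top G'_lft G'_rgt using pip_inj by (simp_all add: inj_eq)
  fix k assume k: "k < length (edges (sier_step G))"
  let ?m = "length (edges G)"
  have k3: "k < 3 * ?m" using k edges_len by simp
  have m: "?m > 0" using k3 by auto
  have "k div ?m < 3" using k3 m by (simp add: less_mult_imp_div_less)
  moreover have "k mod ?m < ?m" using m by simp
  ultimately show "fst (edges (sier_step G) ! k) \<in> verts (sier_step G) \<and> snd (edges (sier_step G) ! k) \<in> verts (sier_step G)"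
    using edges_nth[OF k3] ein[of "k mod ?m"] unfolding V'_fc by (auto simp: map_prod_def split: prod.splits)
qed

definition join :: "nat set \<Rightarrow> nat set \<Rightarrow> nat set \<Rightarrow> nat set" where
  "join A B C = A \<union> (\<lambda>j. length (edges G) + j) ` B \<union> (\<lambda>j. 2 * length (edges G) + j) ` C"

lemma edge_ids_G': "edge_ids (sier_step G) = {0..<3 * length (edges G)}"
  by (simp add: edge_ids_def edges_len)

lemma sel_join:
  assumes "A \<subseteq> edge_ids G" "B \<subseteq> edge_ids G" "C \<subseteq> edge_ids G"
  shows "sel 0 (join A B C) = A" "sel 1 (join A B C) = B" "sel 2 (join A B C) = C"
  using assms by (auto simp: sel_def join_def edge_ids_def)

lemma join_sel:
  assumes "S' \<subseteq> edge_ids (sier_step G)"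
  shows "join (sel 0 S') (sel 1 S') (sel 2 S') = S'"
proof -
  let ?m = "length (edges G)"
  have "x \<in> join (sel 0 S') (sel 1 S') (sel 2 S')" if "x \<in> S'" for x
  proof -
    have x: "x < 3 * ?m" using that assms edge_ids_G' by auto
    consider "x < ?m" | "?m \<le> x" "x < 2 * ?m" | "2 * ?m \<le> x" by linarith
    then show ?thesis
    proof cases
      case 1 then show ?thesis using that by (simp add: join_def sel_def)
    next
      case 2
      then have "x - ?m \<in> sel 1 S'" using that by (simp add: sel_def)
      then show ?thesis using 2 unfolding join_def by (auto intro!: image_eqI[of _ _ "x - ?m"])
    next
      case 3
      then have "x - 2 * ?m \<in> sel 2 S'" using that x by (simp add: sel_def)
      then show ?thesis using 3 unfolding join_def by (auto intro!: image_eqI[of _ _ "x - 2 * ?m"])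
    qed
  qed
  moreover have "join (sel 0 S') (sel 1 S') (sel 2 S') \<subseteq> S'"
    by (auto simp: join_def sel_def)
  ultimately show ?thesis by blast
qed

lemma join_sub: "A \<subseteq> edge_ids G \<Longrightarrow> B \<subseteq> edge_ids G \<Longrightarrow> C \<subseteq> edge_ids G \<Longrightarrow> join A B C \<subseteq> edge_ids (sier_step G)"
  by (auto simp: join_def edge_ids_def edges_len)

lemma bij_join: "bij_betw (\<lambda>(A,B,C). join A B C) (Pow (edge_ids G) \<times> Pow (edge_ids G) \<times> Pow (edge_ids G)) (Pow (edge_ids (sier_step G)))"
proof (rule bij_betw_byWitness[where f' = "\<lambda>S'. (sel 0 S', sel 1 S', sel 2 S')"])
  show "\<forall>a\<in>Pow (edge_ids G) \<times> Pow (edge_ids G) \<times> Pow (edge_ids G).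
          (\<lambda>S'. (sel 0 S', sel 1 S', sel 2 S')) ((\<lambda>(A,B,C). join A B C) a) = a"
  proof
    fix a assume "a \<in> Pow (edge_ids G) \<times> Pow (edge_ids G) \<times> Pow (edge_ids G)"
    then obtain A B C where "a = (A,B,C)" "A \<subseteq> edge_ids G" "B \<subseteq> edge_ids G" "C \<subseteq> edge_ids G" by auto
    then show "(\<lambda>S'. (sel 0 S', sel 1 S', sel 2 S')) ((\<lambda>(A,B,C). join A B C) a) = a"
      using sel_join[of A B C] by simp
  qed
  show "\<forall>a'\<in>Pow (edge_ids (sier_step G)). (\<lambda>(A,B,C). join A B C) ((\<lambda>S'. (sel 0 S', sel 1 S', sel 2 S')) a') = a'"
    using join_sel by simp
  show "(\<lambda>(A,B,C). join A B C) ` (Pow (edge_ids G) \<times> Pow (edge_ids G) \<times> Pow (edge_ids G)) \<subseteq> Pow (edge_ids (sier_step G))"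
    using join_sub by auto
  show "(\<lambda>S'. (sel 0 S', sel 1 S', sel 2 S')) ` Pow (edge_ids (sier_step G)) \<subseteq> Pow (edge_ids G) \<times> Pow (edge_ids G) \<times> Pow (edge_ids G)"
    using sel_sub by auto
qed

lemma card_join:
  assumes "A \<subseteq> edge_ids G" "B \<subseteq> edge_ids G" "C \<subseteq> edge_ids G"
  shows "card (join A B C) = card A + card B + card C"
proof -
  let ?m = "length (edges G)"
  have fA: "finite A" "finite B" "finite C" using assms by (auto simp: edge_ids_def intro: finite_subset)
  have cB: "card ((\<lambda>j. ?m + j) ` B) = card B" by (simp add: card_image)
  have cC: "card ((\<lambda>j. 2 * ?m + j) ` C) = card C" by (simp add: card_image)
  have d1: "A \<inter> (\<lambda>j. ?m + j) ` B = {}" using assms by (auto simp: edge_ids_def)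
  have d2: "(A \<union> (\<lambda>j. ?m + j) ` B) \<inter> (\<lambda>j. 2 * ?m + j) ` C = {}" using assms by (auto simp: edge_ids_def)
  show ?thesis unfolding join_def
    using card_Un_disjoint[OF _ _ d2] card_Un_disjoint[OF _ _ d1] fA cB cC by simp
qed

lemma rk_good: "good G S \<Longrightarrow> rk G S = card (verts G) - nc (st G S)"
  by (simp add: rk_def ncomp_good)

lemma nul_join:
  assumes fo: "forest G" and sub: "A \<subseteq> edge_ids G" "B \<subseteq> edge_ids G" "C \<subseteq> edge_ids G"
    and g: "good G A" "good G B" "good G C" "gc (st G A) (st G B) (st G C)"
  shows "nul (sier_step G) (join A B C) = nul G A + nul G B + nul G C + kk (st G A) (st G B) (st G C)"
    and "rk (sier_step G) (join A B C) \<le> card (join A B C)"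
proof -
  let ?S = "join A B C"
  have gs: "good (sier_step G) ?S"
    using good_G'[OF join_sub[OF sub]] sel_join[OF sub] g by (simp add: all3)
  have nc': "ncomp (sier_step G) ?S = cc (st G A) (st G B) (st G C)"
    using ncomp_G'[OF gs] sel_join[OF sub] by simp
  let ?v = "card (verts G)"
  let ?a = "nc (st G A)" and ?b = "nc (st G B)" and ?c = "nc (st G C)" and ?cc = "cc (st G A) (st G B) (st G C)"
  have v3: "3 \<le> ?v" by (rule card_V3)
  have ns: "?a \<le> 3" "?b \<le> 3" "?c \<le> 3" "?cc \<le> 6" using nc_le3 cc_le6 by auto
  have fA: "?v - ?a \<le> card A" "?v - ?b \<le> card B" "?v - ?c \<le> card C"
    using fo g unfolding forest_def by (auto simp: rk_good)
  have gn: "?a + ?b + ?c \<le> 3 + ?cc" using gc_nc[OF g(4)] .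
  have rk': "rk (sier_step G) ?S = (3 * ?v - 3) - ?cc" unfolding rk_def nc' card_V' ..
  have cS: "card ?S = card A + card B + card C" by (rule card_join[OF sub])
  show "nul (sier_step G) ?S = nul G A + nul G B + nul G C + kk (st G A) (st G B) (st G C)"
    unfolding nul_def rk' cS kk_def using g(1-3) ns fA gn v3 by (simp add: rk_good)
  show "rk (sier_step G) ?S \<le> card ?S" unfolding rk' cS using ns fA gn v3 by arith
qed

end


definition Phi :: "real \<Rightarrow> st \<Rightarrow> st \<Rightarrow> st \<Rightarrow> st \<Rightarrow> real" where
  "Phi y s' s1 s2 s3 = (if gc s1 s2 s3 \<and> stc s1 s2 s3 = s' then (y - 1) ^ kk s1 s2 s3 else 0)"

lemma Wt_alt: "finite (edge_ids G) \<Longrightarrow>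
  Wt G y s = (\<Sum>S\<in>Pow (edge_ids G). if good G S \<and> st G S = s then (y - 1) ^ nul G S else 0)"
proof -
  assume f: "finite (edge_ids G)"
  have "{S. good G S \<and> st G S = s} = {S \<in> Pow (edge_ids G). good G S \<and> st G S = s}"
    by (auto simp: good_def)
  then show ?thesis unfolding Wt_def using sum.inter_filter[of "Pow (edge_ids G)"] f by simp
qed

lemma group2:
  assumes "finite (edge_ids G)"
  shows "(\<Sum>A\<in>Pow (edge_ids G). if good G A then h (st G A) * (y - 1) ^ nul G A else 0)
     = (\<Sum>s\<in>UNIV. h s * Wt G y s)"
proof -
  let ?P = "Pow (edge_ids G)"
  let ?g = "\<lambda>A. h (st G A) * (y - 1) ^ nul G A"
  have fP: "finite {A \<in> ?P. good G A}" using assms by simp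
  have "(\<Sum>A\<in>?P. if good G A then ?g A else 0) = (\<Sum>A\<in>{A \<in> ?P. good G A}. ?g A)"
    using sum.inter_filter[of ?P ?g "good G"] assms by simp
  also have "\<dots> = (\<Sum>s\<in>UNIV. \<Sum>A\<in>{A. A \<in> {A \<in> ?P. good G A} \<and> st G A = s}. ?g A)"
    using sum.group[OF fP finite_st, of "st G" ?g] by simp
  also have "\<dots> = (\<Sum>s\<in>UNIV. h s * Wt G y s)"
  proof (rule sum.cong[OF refl])
    fix s
    have e: "{A. A \<in> {A \<in> ?P. good G A} \<and> st G A = s} = {S. good G S \<and> st G S = s}"
      by (auto simp: good_def)
    show "(\<Sum>A\<in>{A. A \<in> {A \<in> ?P. good G A} \<and> st G A = s}. ?g A) = h s * Wt G y s"
      unfolding e Wt_def by (simp add: sum_distrib_left)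
  qed
  finally show ?thesis .
qed

context sgl begin

lemma finE: "finite (edge_ids G)" by (simp add: edge_ids_def)

lemma Wt_step:
  assumes fo: "forest G"
  shows "Wt (sier_step G) y s' =
    (\<Sum>s1\<in>UNIV. \<Sum>s2\<in>UNIV. \<Sum>s3\<in>UNIV. Phi y s' s1 s2 s3 * Wt G y s1 * Wt G y s2 * Wt G y s3)"
proof -
  let ?P = "Pow (edge_ids G)"
  let ?a = "\<lambda>S. (y - 1) ^ nul G S"
  let ?F = "\<lambda>S'. if good (sier_step G) S' \<and> st (sier_step G) S' = s' then (y - 1) ^ nul (sier_step G) S' else 0"
  let ?W = "Wt G y"
  have fE': "finite (edge_ids (sier_step G))" by (simp add: edge_ids_def)
  have "Wt (sier_step G) y s' = (\<Sum>S'\<in>Pow (edge_ids (sier_step G)). ?F S')"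
    by (rule Wt_alt[OF fE'])
  also have "\<dots> = (\<Sum>(A,B,C)\<in>?P \<times> ?P \<times> ?P. ?F (join A B C))"
    unfolding sum.reindex_bij_betw[OF bij_join, of ?F, symmetric] by (intro sum.cong refl) (auto split: prod.splits)
  also have "\<dots> = (\<Sum>A\<in>?P. \<Sum>B\<in>?P. \<Sum>C\<in>?P. ?F (join A B C))"
    by (simp add: sum.cartesian_product)
  also have "\<dots> = (\<Sum>A\<in>?P. \<Sum>B\<in>?P. \<Sum>C\<in>?P.
      if good G A \<and> good G B \<and> good G C then Phi y s' (st G A) (st G B) (st G C) * (?a A * ?a B * ?a C) else 0)"
  proof (intro sum.cong refl)
    fix A B C assume abc: "A \<in> ?P" "B \<in> ?P" "C \<in> ?P"
    then have sub: "A \<subseteq> edge_ids G" "B \<subseteq> edge_ids G" "C \<subseteq> edge_ids G" by auto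
    have gg: "good (sier_step G) (join A B C) \<longleftrightarrow> good G A \<and> good G B \<and> good G C \<and> gc (st G A) (st G B) (st G C)"
      using good_G'[OF join_sub[OF sub]] sel_join[OF sub] by (simp add: all3)
    have sj: "st (sier_step G) (join A B C) = stc (st G A) (st G B) (st G C)"
      using st_G' sel_join[OF sub] by simp
    show "?F (join A B C) = (if good G A \<and> good G B \<and> good G C then Phi y s' (st G A) (st G B) (st G C) * (?a A * ?a B * ?a C) else 0)"
    proof (cases "good G A \<and> good G B \<and> good G C \<and> gc (st G A) (st G B) (st G C)")
      case True
      then have "nul (sier_step G) (join A B C) = nul G A + nul G B + nul G C + kk (st G A) (st G B) (st G C)"
        using nul_join(1)[OF fo sub] by blast
      then show ?thesis using True gg sj by (simp add: Phi_def power_add mult_ac)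
    next
      case False
      then show ?thesis using gg by (auto simp: Phi_def)
    qed
  qed
  also have "\<dots> = (\<Sum>A\<in>?P. \<Sum>B\<in>?P. if good G A \<and> good G B then
        (\<Sum>s3\<in>UNIV. (Phi y s' (st G A) (st G B) s3 * (?a A * ?a B)) * ?W s3) else 0)"
  proof (intro sum.cong refl)
    fix A B
    show "(\<Sum>C\<in>?P. if good G A \<and> good G B \<and> good G C then Phi y s' (st G A) (st G B) (st G C) * (?a A * ?a B * ?a C) else 0)
      = (if good G A \<and> good G B then (\<Sum>s3\<in>UNIV. (Phi y s' (st G A) (st G B) s3 * (?a A * ?a B)) * ?W s3) else 0)"
    proof (cases "good G A \<and> good G B")
      case True
      have "(\<Sum>C\<in>?P. if good G A \<and> good G B \<and> good G C then Phi y s' (st G A) (st G B) (st G C) * (?a A * ?a B * ?a C) else 0)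
        = (\<Sum>C\<in>?P. if good G C then (Phi y s' (st G A) (st G B) (st G C) * (?a A * ?a B)) * ?a C else 0)"
        using True by (intro sum.cong refl) (simp add: mult_ac)
      also have "\<dots> = (\<Sum>s3\<in>UNIV. (Phi y s' (st G A) (st G B) s3 * (?a A * ?a B)) * ?W s3)"
        by (rule group2[OF finE])
      finally show ?thesis using True by simp
    next
      case False
      then show ?thesis by (auto intro: sum.neutral)
    qed
  qed
  also have "\<dots> = (\<Sum>A\<in>?P. if good G A then
        (\<Sum>s2\<in>UNIV. (\<Sum>s3\<in>UNIV. Phi y s' (st G A) s2 s3 * ?a A * ?W s3) * ?W s2) else 0)"
  proof (intro sum.cong refl)
    fix A
    show "(\<Sum>B\<in>?P. if good G A \<and> good G B then (\<Sum>s3\<in>UNIV. (Phi y s' (st G A) (st G B) s3 * (?a A * ?a B)) * ?W s3) else 0)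
      = (if good G A then (\<Sum>s2\<in>UNIV. (\<Sum>s3\<in>UNIV. Phi y s' (st G A) s2 s3 * ?a A * ?W s3) * ?W s2) else 0)"
    proof (cases "good G A")
      case True
      have "(\<Sum>B\<in>?P. if good G A \<and> good G B then (\<Sum>s3\<in>UNIV. (Phi y s' (st G A) (st G B) s3 * (?a A * ?a B)) * ?W s3) else 0)
        = (\<Sum>B\<in>?P. if good G B then (\<Sum>s3\<in>UNIV. Phi y s' (st G A) (st G B) s3 * ?a A * ?W s3) * ?a B else 0)"
        using True by (intro sum.cong refl) (simp add: sum_distrib_left sum_distrib_right mult_ac)
      also have "\<dots> = (\<Sum>s2\<in>UNIV. (\<Sum>s3\<in>UNIV. Phi y s' (st G A) s2 s3 * ?a A * ?W s3) * ?W s2)"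
        by (rule group2[OF finE])
      finally show ?thesis using True by simp
    next
      case False
      then show ?thesis by (auto intro: sum.neutral)
    qed
  qed
  also have "\<dots> = (\<Sum>A\<in>?P. if good G A then
        (\<Sum>s2\<in>UNIV. \<Sum>s3\<in>UNIV. Phi y s' (st G A) s2 s3 * ?W s3 * ?W s2) * ?a A else 0)"
    by (intro sum.cong refl) (simp add: sum_distrib_left sum_distrib_right mult_ac)
  also have "\<dots> = (\<Sum>s1\<in>UNIV. (\<Sum>s2\<in>UNIV. \<Sum>s3\<in>UNIV. Phi y s' s1 s2 s3 * ?W s3 * ?W s2) * ?W s1)"
    by (rule group2[OF finE])
  also have "\<dots> = (\<Sum>s1\<in>UNIV. \<Sum>s2\<in>UNIV. \<Sum>s3\<in>UNIV. Phi y s' s1 s2 s3 * ?W s1 * ?W s2 * ?W s3)"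
    by (simp add: sum_distrib_left sum_distrib_right mult_ac)
  finally show ?thesis .
qed

lemma forest_G': "forest G \<Longrightarrow> forest (sier_step G)"
  unfolding forest_def
proof (intro allI impI)
  fix S' assume fo: "\<forall>S. good G S \<longrightarrow> rk G S \<le> card S" and g: "good (sier_step G) S'"
  have sub: "S' \<subseteq> edge_ids (sier_step G)" using g by (simp add: good_def)
  have gs: "good G (sel 0 S')" "good G (sel 1 S')" "good G (sel 2 S')" "gc (st G (sel 0 S')) (st G (sel 1 S')) (st G (sel 2 S'))"
    using good_G'[OF sub] g by (simp_all add: all3)
  have "rk (sier_step G) (join (sel 0 S') (sel 1 S') (sel 2 S')) \<le> card (join (sel 0 S') (sel 1 S') (sel 2 S'))"
    using nul_join(2)[OF _ sel_sub sel_sub sel_sub gs] fo unfolding forest_def by blast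
  then show "rk (sier_step G) S' \<le> card S'" using join_sel[OF sub] by simp
qed

lemma full_G': assumes "good G (edge_ids G)" "st G (edge_ids G) = SF"
  shows "good (sier_step G) (edge_ids (sier_step G)) \<and> st (sier_step G) (edge_ids (sier_step G)) = SF"
proof -
  have s: "sel i (edge_ids (sier_step G)) = edge_ids G" if "i<3" for i
    using lt3[OF that] by (auto simp: sel_def edge_ids_G' edge_ids_def edges_len)
  have gc: "gc SF SF SF" "stc SF SF SF = SF" by (simp_all add: gc_def stc_def lab_def stof_def)
  show ?thesis using good_G'[of "edge_ids (sier_step G)"] st_G'[of "edge_ids (sier_step G)"] s assms gc
    by (simp add: all3)
qed

end


lemma evalPhi:
  fixes W :: "st \<Rightarrow> real"
  assumes "W SNl = W SNt" "W SNr = W SNt"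
  shows "(\<Sum>s1\<in>UNIV. \<Sum>s2\<in>UNIV. \<Sum>s3\<in>UNIV. Phi y s' s1 s2 s3 * W s1 * W s2 * W s3) =
    (case s' of SF \<Rightarrow> (y - 1) * W SF ^ 3 + 6 * W SF ^ 2 * W SNt
      | SM \<Rightarrow> 3 * (y - 1) * W SF * W SNt ^ 2 + 12 * W SF * W SNt * W SM + 14 * W SNt ^ 3
      | _ \<Rightarrow> (y - 1) * W SF ^ 2 * W SNt + W SF ^ 2 * W SM + 7 * W SF * W SNt ^ 2)"
  using assms
  by (cases s'; simp add: UNIV_st Phi_def gc_def stc_def kk_def cc_def lab_def stof_def card_insert_if;
      simp add: algebra_simps power3_eq_cube power2_eq_square)


context sgl begin

lemma class_in: "a \<in> verts G \<Longrightarrow> conn G S``{a} \<in> verts G // conn G S"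
  by (rule quotientI)

lemma class_eq: "a \<in> verts G \<Longrightarrow> b \<in> verts G \<Longrightarrow> conn G S``{a} = conn G S``{b} \<longleftrightarrow> (a,b) \<in> conn G S"
  by (rule eq_equiv_class_iff[OF conn_equiv])

lemma good_of_classes:
  assumes "S \<subseteq> edge_ids G" "verts G // conn G S \<subseteq> (\<lambda>q. conn G S``{q}) ` OG G"
  shows "good G S"
  unfolding good_def
proof (intro conjI assms(1) ballI)
  fix X assume "X \<in> verts G // conn G S"
  then obtain q where q: "q \<in> OG G" "X = conn G S``{q}" using assms(2) by blast
  have "q \<in> verts G" using q(1) tin lin rin by (auto simp: OG_def)
  then have "q \<in> X" using q(2) conn_refl by blast
  then show "X \<inter> OG G \<noteq> {}" using q(1) by blast
qed

context
  assumes full: "good G (edge_ids G)" "st G (edge_ids G) = SF"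
begin

lemma ncompE: "ncomp G (edge_ids G) = 1"
  using ncomp_good[OF full(1)] full(2) by simp

lemma rk_diff: "rk G (edge_ids G) - rk G S = ncomp G S - 1"
  unfolding rk_def ncompE using ncomp_le[of S] ncomp_ge1[of S] by simp

lemma ncomp1_iff: assumes "S \<subseteq> edge_ids G" shows "ncomp G S = 1 \<longleftrightarrow> good G S \<and> st G S = SF"
proof
  assume "good G S \<and> st G S = SF" then show "ncomp G S = 1" using ncomp_good by simp
next
  assume n: "ncomp G S = 1"
  let ?R = "conn G S"
  obtain X where X: "verts G // ?R = {X}" using n unfolding ncomp_def by (rule card_1_singletonE)
  have all: "?R``{a} = X" if "a \<in> verts G" for a using class_in[OF that, of S] X by blast
  have c: "(a,b) \<in> ?R" if "a \<in> verts G" "b \<in> verts G" for a b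
    using all[OF that(1)] all[OF that(2)] class_eq[of a b S] that by simp
  have "good G S"
    by (rule good_of_classes[OF assms]) (use X all tin in \<open>auto simp: OG_def\<close>)
  moreover have "st G S = SF" unfolding st_def stof_def using c tin lin rin by simp
  ultimately show "good G S \<and> st G S = SF" by blast
qed

lemma ncomp1_iff': "S \<subseteq> edge_ids G \<Longrightarrow> ncomp G S = Suc 0 \<longleftrightarrow> good G S \<and> st G S = SF"
  using ncomp1_iff by simp

lemma tw1: "tweight G 1 y S = (if ncomp G S = 1 then (y - 1) ^ nul G S else 0)"
  unfolding tweight_def rk_diff using ncomp_ge1[of S] by simp

lemma tutte1: "tutte G 1 y = Wt G y SF"
proof -
  have "tutte G 1 y = (\<Sum>S\<in>Pow (edge_ids G). if good G S \<and> st G S = SF then (y - 1) ^ nul G S else 0)"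
    unfolding tutte_def
  proof (intro sum.cong refl)
    fix S assume "S \<in> Pow (edge_ids G)"
    then have "ncomp G S = 1 \<longleftrightarrow> good G S \<and> st G S = SF" using ncomp1_iff by blast
    then show "tweight G 1 y S = (if good G S \<and> st G S = SF then (y - 1) ^ nul G S else 0)"
      unfolding tw1 by presburger
  qed
  then show ?thesis using Wt_alt[OF finE] by simp
qed

lemma T2_1: "T2 G 1 y = Wt G y SF"
proof -
  let ?c = "\<lambda>S. (top G, lft G) \<in> conn G S \<and> (top G, rgt G) \<in> conn G S"
  have "T2 G 1 y = (\<Sum>S\<in>{S \<in> Pow (edge_ids G). ?c S}. tweight G 1 y S)"
    unfolding T2_def by (rule sum.cong) auto
  also have "\<dots> = (\<Sum>S\<in>Pow (edge_ids G). if ?c S then tweight G 1 y S else 0)"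
    by (rule sum.inter_filter[OF finite_Pow_iff[THEN iffD2, OF finE]])
  also have "\<dots> = (\<Sum>S\<in>Pow (edge_ids G). if good G S \<and> st G S = SF then (y - 1) ^ nul G S else 0)"
  proof (intro sum.cong refl)
    fix S assume "S \<in> Pow (edge_ids G)"
    then have n: "ncomp G S = 1 \<longleftrightarrow> good G S \<and> st G S = SF" using ncomp1_iff by blast
    have "?c S" if "st G S = SF" using st_bool[of S] that by simp
    then show "(if ?c S then tweight G 1 y S else 0) = (if good G S \<and> st G S = SF then (y - 1) ^ nul G S else 0)"
      using n unfolding tw1 by presburger
  qed
  finally show ?thesis using Wt_alt[OF finE] by simp
qed

lemma N_1: "Npoly G 1 y = Wt G y SNt"
proof -
  let ?c = "\<lambda>S. (lft G, rgt G) \<in> conn G S \<and> (top G, lft G) \<notin> conn G S"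
  let ?f = "\<lambda>S. (1 - 1) ^ (rk G (edge_ids G) - rk G S - 1) * (y - 1) ^ nul G S :: real"
  have "Npoly G 1 y = (\<Sum>S\<in>{S \<in> Pow (edge_ids G). ?c S}. ?f S)"
    unfolding Npoly_def by (rule sum.cong) auto
  also have "\<dots> = (\<Sum>S\<in>Pow (edge_ids G). if ?c S then ?f S else 0)"
    by (rule sum.inter_filter[OF finite_Pow_iff[THEN iffD2, OF finE]])
  also have "\<dots> = (\<Sum>S\<in>Pow (edge_ids G). if good G S \<and> st G S = SNt then (y - 1) ^ nul G S else 0)"
  proof (intro sum.cong refl)
    fix S assume S: "S \<in> Pow (edge_ids G)"
    let ?R = "conn G S"
    show "(if ?c S then ?f S else 0) = (if good G S \<and> st G S = SNt then (y - 1) ^ nul G S else 0)"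
    proof (cases "?c S")
      case False
      then have nc: "\<not> (good G S \<and> st G S = SNt)" using st_bool[of S] by auto
      show ?thesis unfolding if_not_P[OF False] if_not_P[OF nc] ..
    next
      case True
      have ne: "?R``{top G} \<noteq> ?R``{lft G}" using True class_eq tin lin by blast
      have sub: "{?R``{top G}, ?R``{lft G}} \<subseteq> verts G // ?R" using class_in tin lin by blast
      have c2: "card {?R``{top G}, ?R``{lft G}} = 2" using ne by simp
      have ge: "2 \<le> ncomp G S" unfolding ncomp_def using card_mono[OF fin_quot sub] c2 by simp
      have tr': "(top G, rgt G) \<notin> ?R" using True conn_trans conn_sym by blast
      have stv: "st G S = SNt" unfolding st_def stof_def using True tr' by simp
      show ?thesis
      proof (cases "ncomp G S = 2")
        case True
        then have eq: "{?R``{top G}, ?R``{lft G}} = verts G // ?R"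
          using card_subset_eq[OF fin_quot sub] c2 unfolding ncomp_def by simp
        have "good G S"
          by (rule good_of_classes) (use S eq in \<open>auto simp: OG_def\<close>)
        then show ?thesis using \<open>?c S\<close> stv True by (simp add: rk_diff)
      next
        case False
        then have "ncomp G S - 1 - 1 > 0" using ge by simp
        then have "?f S = 0" by (simp add: rk_diff)
        moreover have "\<not> good G S" using ncomp_good stv False by auto
        ultimately show ?thesis using \<open>?c S\<close> by simp
      qed
    qed
  qed
  finally show ?thesis using Wt_alt[OF finE] by simp
qed

lemma M_1: "Mpoly G 1 y = Wt G y SM"
proof -
  let ?c = "\<lambda>S. (top G, lft G) \<notin> conn G S \<and> (top G, rgt G) \<notin> conn G S \<and> (lft G, rgt G) \<notin> conn G S"
  let ?f = "\<lambda>S. (1 - 1) ^ (rk G (edge_ids G) - rk G S - 2) * (y - 1) ^ nul G S :: real"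
  have "Mpoly G 1 y = (\<Sum>S\<in>{S \<in> Pow (edge_ids G). ?c S}. ?f S)"
    unfolding Mpoly_def by (rule sum.cong) auto
  also have "\<dots> = (\<Sum>S\<in>Pow (edge_ids G). if ?c S then ?f S else 0)"
    by (rule sum.inter_filter[OF finite_Pow_iff[THEN iffD2, OF finE]])
  also have "\<dots> = (\<Sum>S\<in>Pow (edge_ids G). if good G S \<and> st G S = SM then (y - 1) ^ nul G S else 0)"
  proof (intro sum.cong refl)
    fix S assume S: "S \<in> Pow (edge_ids G)"
    let ?R = "conn G S"
    show "(if ?c S then ?f S else 0) = (if good G S \<and> st G S = SM then (y - 1) ^ nul G S else 0)"
    proof (cases "?c S")
      case False
      then have nc: "\<not> (good G S \<and> st G S = SM)" using st_bool[of S] by auto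
      show ?thesis unfolding if_not_P[OF False] if_not_P[OF nc] ..
    next
      case True
      have ne: "?R``{top G} \<noteq> ?R``{lft G}" "?R``{top G} \<noteq> ?R``{rgt G}" "?R``{lft G} \<noteq> ?R``{rgt G}"
        using True class_eq tin lin rin by blast+
      have sub: "{?R``{top G}, ?R``{lft G}, ?R``{rgt G}} \<subseteq> verts G // ?R" using class_in tin lin rin by blast
      have c3: "card {?R``{top G}, ?R``{lft G}, ?R``{rgt G}} = 3" using ne by simp
      have ge: "3 \<le> ncomp G S" unfolding ncomp_def using card_mono[OF fin_quot sub] c3 by simp
      have stv: "st G S = SM" unfolding st_def stof_def using True by simp
      show ?thesis
      proof (cases "ncomp G S = 3")
        case True
        then have eq: "{?R``{top G}, ?R``{lft G}, ?R``{rgt G}} = verts G // ?R"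
          using card_subset_eq[OF fin_quot sub] c3 unfolding ncomp_def by simp
        have "good G S"
          by (rule good_of_classes) (use S eq in \<open>auto simp: OG_def\<close>)
        then show ?thesis using \<open>?c S\<close> stv True by (simp add: rk_diff)
      next
        case False
        then have "ncomp G S - 1 - 2 > 0" using ge by simp
        then have "?f S = 0" by (simp add: rk_diff)
        moreover have "\<not> good G S" using ncomp_good stv False by auto
        ultimately show ?thesis using \<open>?c S\<close> by simp
      qed
    qed
  qed
  finally show ?thesis using Wt_alt[OF finE] by simp
qed

lemma rel_Wt:
  assumes fo: "forest G" and p: "p < 1"
  shows "reliability G p = p ^ (card (verts G) - 1) * (1 - p) ^ (card (edge_ids G) - (card (verts G) - 1))
     * Wt G (1 / (1 - p)) SF"
proof -
  let ?r = "card (verts G) - 1" and ?m = "card (edge_ids G)"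
  have p0: "1 - p \<noteq> 0" using p by simp
  have rkg: "rk G S = ?r" if "good G S" "st G S = SF" for S
    using that by (simp add: rk_good)
  have key: "p ^ card S * (1 - p) ^ (?m - card S) = p ^ ?r * (1 - p) ^ (?m - ?r) * (1 / (1 - p) - 1) ^ nul G S"
    if S: "S \<subseteq> edge_ids G" "good G S" "st G S = SF" for S
  proof -
    have r: "?r \<le> card S" using fo S rkg unfolding forest_def by metis
    have cm: "card S \<le> ?m" using S(1) card_mono[OF finE] by blast
    have n: "nul G S = card S - ?r" unfolding nul_def using rkg[OF S(2,3)] by simp
    obtain k where k: "card S = ?r + k" using r le_Suc_ex by blast
    obtain j where j: "?m = card S + j" using cm le_Suc_ex by blast
    have e1: "?m - card S = j" using j by simp
    have e2: "?m - ?r = j + k" using j k by simp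
    have q: "1 / (1 - p) - 1 = p / (1 - p)" using p0 by (simp add: field_simps)
    have l: "p ^ card S * (1 - p) ^ (?m - card S) = p ^ (?r + k) * (1 - p) ^ j" using k e1 by simp
    have nk: "nul G S = k" using n k by simp
    have "p ^ (?r + k) * (1 - p) ^ j = p ^ ?r * (1 - p) ^ (j + k) * (p / (1 - p)) ^ k"
      using p0 by (simp add: power_add power_divide field_simps)
    then show ?thesis unfolding l nk e2 q .
  qed
  have "reliability G p = (\<Sum>S\<in>{S \<in> Pow (edge_ids G). good G S \<and> st G S = SF}. p ^ card S * (1 - p) ^ (?m - card S))"
    unfolding reliability_def
    by (rule sum.cong) (auto simp: ncomp1_iff ncomp1_iff')
  also have "\<dots> = (\<Sum>S\<in>{S \<in> Pow (edge_ids G). good G S \<and> st G S = SF}. p ^ ?r * (1 - p) ^ (?m - ?r) * (1 / (1 - p) - 1) ^ nul G S)"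
    by (rule sum.cong) (auto simp: key)
  also have "\<dots> = p ^ ?r * (1 - p) ^ (?m - ?r) * Wt G (1 / (1 - p)) SF"
  proof -
    have "{S \<in> Pow (edge_ids G). good G S \<and> st G S = SF} = {S. good G S \<and> st G S = SF}"
      by (auto simp: good_def)
    then show ?thesis unfolding Wt_def by (simp add: sum_distrib_left)
  qed
  finally show ?thesis .
qed

end
end


lemma tri: "verts triangle = {0,1,2}" "edges triangle = [(0,1),(1,2),(0,2)]"
  "top triangle = 0" "lft triangle = 1" "rgt triangle = 2" "edge_ids triangle = {0,1,2}"
  by (auto simp: triangle_def edge_ids_def)

lemma sgl_tri: "sgl triangle"
  by (unfold_locales) (auto simp: tri less_Suc_eq numeral_3_eq_3 nth_Cons')

lemma ex_in3: "(\<exists>i\<in>S. i < 3 \<and> P i) \<longleftrightarrow> (0 \<in> S \<and> P 0) \<or> (1 \<in> S \<and> P 1) \<or> (2 \<in> S \<and> P (2::nat))"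
proof
  assume "\<exists>i\<in>S. i < 3 \<and> P i" then show "(0 \<in> S \<and> P 0) \<or> (1 \<in> S \<and> P 1) \<or> (2 \<in> S \<and> P (2::nat))"
    using lt3 by auto
next
  have n: "0 < (3::nat)" "1 < (3::nat)" "2 < (3::nat)" by simp_all
  assume "(0 \<in> S \<and> P 0) \<or> (1 \<in> S \<and> P 1) \<or> (2 \<in> S \<and> P (2::nat))"
  then show "\<exists>i\<in>S. i < 3 \<and> P i" using n by blast
qed

lemma adj_tri: "adj triangle S u v \<longleftrightarrow> (0 \<in> S \<and> (u,v) \<in> {(0,1),(1,0)}) \<or> (1 \<in> S \<and> (u,v) \<in> {(1,2),(2,1)}) \<or> (2 \<in> S \<and> (u,v) \<in> {(0,2),(2,0)})"
proof -
  have l: "length (edges triangle) = 3" by (simp add: tri)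
  show ?thesis unfolding adj_def l ex_in3 by (auto simp: tri)
qed

lemma conn_tri_pos: "adj triangle S u v \<Longrightarrow> (u,v) \<in> conn triangle S"
  using adj_in[OF sgl.ein[OF sgl_tri]] unfolding conn_def by blast

lemma conn_tri_neg: assumes "\<And>a b. adj triangle S a b \<Longrightarrow> a \<in> X \<Longrightarrow> b \<in> X" "u \<in> X" "v \<notin> X"
  shows "(u,v) \<notin> conn triangle S"
proof
  assume "(u,v) \<in> conn triangle S"
  then have "(adj triangle S)\<^sup>*\<^sup>* u v" unfolding conn_def by blast
  then have "v \<in> X" using rtp_closed[of "adj triangle S" X u v] assms(1,2) by blast
  then show False using assms(3) by blast
qed

lemma c01: "(0,1) \<in> conn triangle S \<longleftrightarrow> 0 \<in> S \<or> (2 \<in> S \<and> 1 \<in> S)"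
proof
  assume "0 \<in> S \<or> (2 \<in> S \<and> 1 \<in> S)"
  then show "(0,1) \<in> conn triangle S"
    using conn_tri_pos[of S] conn_trans[of _ _ triangle S] by (metis adj_tri insertI1 insertI2)
next
  assume c: "(0,1) \<in> conn triangle S"
  show "0 \<in> S \<or> (2 \<in> S \<and> 1 \<in> S)"
  proof (rule ccontr)
    assume n: "\<not> (0 \<in> S \<or> (2 \<in> S \<and> 1 \<in> S))"
    show False
    proof (cases "2 \<in> S")
      case False
      then have "(0,1) \<notin> conn triangle S" using n by (intro conn_tri_neg[of S "{0}"]) (auto simp: adj_tri)
      then show False using c by blast
    next
      case True
      then have "(0,1) \<notin> conn triangle S" using n by (intro conn_tri_neg[of S "{0,2}"]) (auto simp: adj_tri)
      then show False using c by blast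
    qed
  qed
qed

lemma c02: "(0,2) \<in> conn triangle S \<longleftrightarrow> 2 \<in> S \<or> (0 \<in> S \<and> 1 \<in> S)"
proof
  assume "2 \<in> S \<or> (0 \<in> S \<and> 1 \<in> S)"
  then show "(0,2) \<in> conn triangle S"
    using conn_tri_pos[of S] conn_trans[of _ _ triangle S] by (metis adj_tri insertI1 insertI2)
next
  assume c: "(0,2) \<in> conn triangle S"
  show "2 \<in> S \<or> (0 \<in> S \<and> 1 \<in> S)"
  proof (rule ccontr)
    assume n: "\<not> (2 \<in> S \<or> (0 \<in> S \<and> 1 \<in> S))"
    show False
    proof (cases "0 \<in> S")
      case False
      then have "(0,2) \<notin> conn triangle S" using n by (intro conn_tri_neg[of S "{0}"]) (auto simp: adj_tri)
      then show False using c by blast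
    next
      case True
      then have "(0,2) \<notin> conn triangle S" using n by (intro conn_tri_neg[of S "{0,1}"]) (auto simp: adj_tri)
      then show False using c by blast
    qed
  qed
qed

lemma c12: "(1,2) \<in> conn triangle S \<longleftrightarrow> 1 \<in> S \<or> (0 \<in> S \<and> 2 \<in> S)"
proof
  assume "1 \<in> S \<or> (0 \<in> S \<and> 2 \<in> S)"
  then show "(1,2) \<in> conn triangle S"
    using conn_tri_pos[of S] conn_trans[of _ _ triangle S] by (metis adj_tri insertI1 insertI2)
next
  assume c: "(1,2) \<in> conn triangle S"
  show "1 \<in> S \<or> (0 \<in> S \<and> 2 \<in> S)"
  proof (rule ccontr)
    assume n: "\<not> (1 \<in> S \<or> (0 \<in> S \<and> 2 \<in> S))"
    show False
    proof (cases "0 \<in> S")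
      case False
      then have "(1,2) \<notin> conn triangle S" using n by (intro conn_tri_neg[of S "{1}"]) (auto simp: adj_tri)
      then show False using c by blast
    next
      case True
      then have "(1,2) \<notin> conn triangle S" using n by (intro conn_tri_neg[of S "{0,1}"]) (auto simp: adj_tri)
      then show False using c by blast
    qed
  qed
qed

lemma st_tri: "st triangle S = stof (0 \<in> S \<or> (2 \<in> S \<and> 1 \<in> S)) (2 \<in> S \<or> (0 \<in> S \<and> 1 \<in> S)) (1 \<in> S \<or> (0 \<in> S \<and> 2 \<in> S))"
  unfolding st_def tri c01 c02 c12 ..

lemma good_tri: "S \<subseteq> edge_ids triangle \<Longrightarrow> good triangle S"
  unfolding good_def
proof (intro conjI ballI, assumption)
  fix X assume X: "X \<in> verts triangle // conn triangle S"
  then have "X \<noteq> {}" using in_quotient_imp_non_empty[OF conn_equiv] by blast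
  moreover have "X \<subseteq> verts triangle" using X by (auto elim!: quotientE simp: conn_def)
  moreover have "OG triangle = verts triangle" by (simp add: OG_def tri)
  ultimately show "X \<inter> OG triangle \<noteq> {}" by blast
qed

lemma nul_tri: "S \<subseteq> edge_ids triangle \<Longrightarrow> nul triangle S = card S - (3 - nc (st triangle S))"
  unfolding nul_def rk_def using sgl.ncomp_good[OF sgl_tri good_tri] by (simp add: tri)

lemma rk_tri: "S \<subseteq> edge_ids triangle \<Longrightarrow> rk triangle S = 3 - nc (st triangle S)"
  unfolding rk_def using sgl.ncomp_good[OF sgl_tri good_tri] by (simp add: tri)

lemma sum_Pow_insert: assumes "finite A" "a \<notin> A"
  shows "(\<Sum>S\<in>Pow (insert a A). f S) = (\<Sum>S\<in>Pow A. f S) + (\<Sum>S\<in>Pow A. f (insert a S))"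
proof -
  have d: "Pow A \<inter> insert a ` Pow A = {}" using assms(2) by auto
  have i: "inj_on (insert a) (Pow A)" using assms(2) unfolding inj_on_def
    by (metis Pow_iff insert_ident subset_iff)
  show ?thesis unfolding Pow_insert
    using sum.union_disjoint[OF _ _ d, of f] sum.reindex[OF i, of f] assms(1) by simp
qed

lemma Wt_tri: "Wt triangle y s = (\<Sum>S\<in>Pow {0,1,2}. if st triangle S = s then (y - 1) ^ (card S - (3 - nc (st triangle S))) else 0)"
  unfolding Wt_alt[OF sgl.finE[OF sgl_tri]]
  by (intro sum.cong) (auto simp: tri good_tri nul_tri)

lemma Wt_tri_vals: "Wt triangle y SF = y + 2" "Wt triangle y SNt = 1" "Wt triangle y SNl = 1" "Wt triangle y SNr = 1" "Wt triangle y SM = 1"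
  unfolding Wt_tri by (simp_all add: sum_Pow_insert st_tri stof_def)


lemma all_Pow_insert: "(\<forall>S\<in>Pow (insert a A). P S) \<longleftrightarrow> (\<forall>S\<in>Pow A. P S \<and> P (insert a S))"
  unfolding Pow_insert by blast

lemma forest_tri: "forest triangle"
  unfolding forest_def
proof (intro allI impI)
  fix S assume "good triangle S"
  then have S: "S \<subseteq> edge_ids triangle" by (simp add: good_def)
  then have "S \<in> Pow {0,1,2}" by (simp add: tri)
  moreover have "\<forall>S\<in>Pow {0::nat,1,2}. 3 - nc (st triangle S) \<le> card S"
    unfolding all_Pow_insert by (simp add: st_tri stof_def card_insert_if)
  ultimately show "rk triangle S \<le> card S" unfolding rk_tri[OF S] by blast
qed

lemma full_tri: "good triangle (edge_ids triangle)" "st triangle (edge_ids triangle) = SF"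
  by (simp_all add: good_tri st_tri tri stof_def)

definition INV :: "nat \<Rightarrow> sgraph \<Rightarrow> bool" where
  "INV k K = (sgl K \<and> forest K \<and> good K (edge_ids K) \<and> st K (edge_ids K) = SF
     \<and> (\<forall>y. Wt K y SNl = Wt K y SNt \<and> Wt K y SNr = Wt K y SNt)
     \<and> 2 * card (verts K) = 3 ^ (k + 1) + 3 \<and> length (edges K) = 3 ^ (k + 1))"

lemma Wt_rec:
  assumes "sgl K" "forest K" "Wt K y SNl = Wt K y SNt" "Wt K y SNr = Wt K y SNt"
  shows "Wt (sier_step K) y s =
    (case s of SF \<Rightarrow> (y - 1) * Wt K y SF ^ 3 + 6 * Wt K y SF ^ 2 * Wt K y SNt
      | SM \<Rightarrow> 3 * (y - 1) * Wt K y SF * Wt K y SNt ^ 2 + 12 * Wt K y SF * Wt K y SNt * Wt K y SM + 14 * Wt K y SNt ^ 3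
      | _ \<Rightarrow> (y - 1) * Wt K y SF ^ 2 * Wt K y SNt + Wt K y SF ^ 2 * Wt K y SM + 7 * Wt K y SF * Wt K y SNt ^ 2)"
  using sgl.Wt_step[OF assms(1,2)] evalPhi[of "Wt K y", OF assms(3,4)] by simp

lemma INV_aux: "INV k (sier_aux k)"
proof (induction k)
  case 0
  show ?case unfolding INV_def
    using sgl_tri forest_tri full_tri Wt_tri_vals by (simp add: tri)
next
  case (Suc k)
  let ?K = "sier_aux k"
  have I: "sgl ?K" "forest ?K" "good ?K (edge_ids ?K)" "st ?K (edge_ids ?K) = SF"
    "\<And>y. Wt ?K y SNl = Wt ?K y SNt" "\<And>y. Wt ?K y SNr = Wt ?K y SNt"
    "2 * card (verts ?K) = 3 ^ (k + 1) + 3" "length (edges ?K) = 3 ^ (k + 1)"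
    using Suc unfolding INV_def by auto
  have c3: "3 \<le> card (verts ?K)" using sgl.card_V3[OF I(1)] .
  have "2 * card (verts (sier_step ?K)) = 3 ^ (Suc k + 1) + 3"
    using sgl.card_V'[OF I(1)] I(7) c3 by simp
  moreover have "length (edges (sier_step ?K)) = 3 ^ (Suc k + 1)"
    using sgl.edges_len[OF I(1)] I(8) by simp
  moreover have "Wt (sier_step ?K) y SNl = Wt (sier_step ?K) y SNt \<and> Wt (sier_step ?K) y SNr = Wt (sier_step ?K) y SNt" for y
    using Wt_rec[OF I(1,2) I(5,6), of y SNl] Wt_rec[OF I(1,2) I(5,6), of y SNt] Wt_rec[OF I(1,2) I(5,6), of y SNr]
    by simp
  ultimately show ?case unfolding INV_def
    using sgl.sgl_G'[OF I(1)] sgl.forest_G'[OF I(1,2)] sgl.full_G'[OF I(1,3,4)] by simp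
qed


theorem proposition3p4:
  fixes n :: nat and p :: real
  assumes "n \<ge> 1" and "0 \<le> p" and "p < 1"
  shows "reliability (Sierpinski n) p
           = p ^ ((3^n + 1) div 2) * (1 - p) ^ ((3^n - 1) div 2)
             * tutte (Sierpinski n) 1 (1 / (1 - p))
    \<and> tutte (Sierpinski n) 1 (1 / (1 - p)) = T2 (Sierpinski n) 1 (1 / (1 - p))
    \<and> T2 (Sierpinski (n+1)) 1 (1 / (1 - p))
        = p / (1 - p) * T2 (Sierpinski n) 1 (1 / (1 - p)) ^ 3
          + 6 * T2 (Sierpinski n) 1 (1 / (1 - p)) ^ 2 * Npoly (Sierpinski n) 1 (1 / (1 - p))
    \<and> Npoly (Sierpinski (n+1)) 1 (1 / (1 - p))
        = p / (1 - p) * T2 (Sierpinski n) 1 (1 / (1 - p)) ^ 2 * Npoly (Sierpinski n) 1 (1 / (1 - p))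
          + T2 (Sierpinski n) 1 (1 / (1 - p)) ^ 2 * Mpoly (Sierpinski n) 1 (1 / (1 - p))
          + 7 * T2 (Sierpinski n) 1 (1 / (1 - p)) * Npoly (Sierpinski n) 1 (1 / (1 - p)) ^ 2
    \<and> Mpoly (Sierpinski (n+1)) 1 (1 / (1 - p))
        = 3 * p / (1 - p) * T2 (Sierpinski n) 1 (1 / (1 - p)) * Npoly (Sierpinski n) 1 (1 / (1 - p)) ^ 2
          + 12 * T2 (Sierpinski n) 1 (1 / (1 - p)) * Npoly (Sierpinski n) 1 (1 / (1 - p))
               * Mpoly (Sierpinski n) 1 (1 / (1 - p))
          + 14 * Npoly (Sierpinski n) 1 (1 / (1 - p)) ^ 3
    \<and> T2 (Sierpinski 1) 1 (1 / (1 - p)) = (3 - 2 * p) / (1 - p)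
    \<and> Npoly (Sierpinski 1) 1 (1 / (1 - p)) = 1
    \<and> Mpoly (Sierpinski 1) 1 (1 / (1 - p)) = 1"
proof -
  let ?y = "1 / (1 - p)"
  define k where "k = n - 1"
  have nk: "n = k + 1" using assms(1) by (simp add: k_def)
  let ?K = "sier_aux k"
  have SK: "Sierpinski n = ?K" by (simp add: Sierpinski_def k_def)
  have SK': "Sierpinski (n+1) = sier_step ?K" by (simp add: Sierpinski_def nk)
  have S1: "Sierpinski 1 = triangle" by (simp add: Sierpinski_def)
  have I: "sgl ?K" "forest ?K" "good ?K (edge_ids ?K)" "st ?K (edge_ids ?K) = SF"
    "\<And>y. Wt ?K y SNl = Wt ?K y SNt" "\<And>y. Wt ?K y SNr = Wt ?K y SNt"
    "2 * card (verts ?K) = 3 ^ (k + 1) + 3" "length (edges ?K) = 3 ^ (k + 1)"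
    using INV_aux[of k] unfolding INV_def by auto
  have I': "sgl (sier_step ?K)" "good (sier_step ?K) (edge_ids (sier_step ?K))" "st (sier_step ?K) (edge_ids (sier_step ?K)) = SF"
    using INV_aux[of "Suc k"] unfolding INV_def by auto
  have y1: "?y - 1 = p / (1 - p)" using assms(3) by (simp add: field_simps)
  let ?W = "Wt ?K ?y"
  have tu: "tutte ?K 1 ?y = ?W SF" by (rule sgl.tutte1[OF I(1,3,4)])
  have t2: "T2 ?K 1 ?y = ?W SF" by (rule sgl.T2_1[OF I(1,3,4)])
  have nn: "Npoly ?K 1 ?y = ?W SNt" by (rule sgl.N_1[OF I(1,3,4)])
  have mm: "Mpoly ?K 1 ?y = ?W SM" by (rule sgl.M_1[OF I(1,3,4)])
  have t2': "T2 (sier_step ?K) 1 ?y = Wt (sier_step ?K) ?y SF" by (rule sgl.T2_1[OF I'])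
  have nn': "Npoly (sier_step ?K) 1 ?y = Wt (sier_step ?K) ?y SNt" by (rule sgl.N_1[OF I'])
  have mm': "Mpoly (sier_step ?K) 1 ?y = Wt (sier_step ?K) ?y SM" by (rule sgl.M_1[OF I'])
  note rec = Wt_rec[OF I(1,2) I(5,6)]
  have rel: "reliability ?K p = p ^ (card (verts ?K) - 1) * (1 - p) ^ (card (edge_ids ?K) - (card (verts ?K) - 1)) * ?W SF"
    by (rule sgl.rel_Wt[OF I(1,3,4,2) assms(3)])
  have ce: "card (edge_ids ?K) = 3 ^ n" using I(8) nk by (simp add: edge_ids_def)
  have cv: "2 * card (verts ?K) = 3 ^ n + 3" using I(7) nk by simp
  have e1: "(3 ^ n + 1) div 2 = card (verts ?K) - 1" using cv by presburger
  have e2: "(3 ^ n - 1) div 2 = card (edge_ids ?K) - (card (verts ?K) - 1)" using cv ce by presburger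
  have base: "T2 triangle 1 ?y = ?y + 2" "Npoly triangle 1 ?y = 1" "Mpoly triangle 1 ?y = 1"
    using sgl.T2_1[OF sgl_tri full_tri] sgl.N_1[OF sgl_tri full_tri] sgl.M_1[OF sgl_tri full_tri] Wt_tri_vals
    by simp_all
  have b1: "?y + 2 = (3 - 2 * p) / (1 - p)" using assms(3) by (simp add: field_simps)
  show ?thesis
    unfolding SK SK' S1 base b1 t2 nn mm t2' nn' mm' rec tu rel e1 e2 y1
    by (simp add: algebra_simps)
qed


end
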